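(* Let $\alpha\in(0,1)$ and $\Omega\in\Delta$, where $\Delta$ is either the set of probability measures on $\Theta_1$ or the set of probability distributions on a fixed finite set $\{\theta_1,\ldots,\theta_{M_1}\}\subset\Theta_1$; write $g_\Omega=\int f_\theta\,d\Omega(\theta)$. Consider $\sup_{\varphi\in\Phi_\alpha}\int(\varphi-\varphi_{ah})g_\Omega\,d\nu$ (problem (P)). Let $\mathcal M_0$ denote the set of finite (nonnegative) measures on $\Theta_0$, and for $\Lambda\in\mathcal M_0$ let \[ L(\varphi,\Lambda)=\int(\varphi-\varphi_{ah})g_\Omega\,d\nu-\int\Big(\int\varphi f_\theta\,d\nu-\alpha\Big)d\Lambda(\theta). \] Then: 1. $\Phi^\ast_\Omega:=\arg\max_{\varphi\in\Phi_\alpha}\int(\varphi-\varphi_{ah})g_\Omega\,d\nu\neq\emptyset$. 2. For every $\Lambda\in\mathcal M_0$, $\Phi^\ast_{\Omega,\Lambda}:=\arg\max_{\varphi\in\Phi}L(\varphi,\Lambda)\neq\emptyset$, and every $\varphi\in\Phi^\ast_{\Omega,\Lambda}$ is of the form $\varphi=1$ on $\{g_\Omega>\int f_\theta\,d\Lambda(\theta)\}$, $\varphi=\varkappa$ on $\{g_\Omega=\int f_\theta\,d\Lambda(\theta)\}$, $\varphi=0$ on $\{g_\Omega<\int f_\theta\,d\Lambda(\theta)\}$, for some $\varkappa\in\Phi$. 3. The value of (P) equals $\inf_{\Lambda\in\mathcal M_0}\sup_{\varphi\in\Phi}L(\varphi,\Lambda)$. 4. Let $\mathcal M_0^\ast=\arg\min_{\Lambda\in\mathcal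 M_0}\sup_{\varphi\in\Phi}L(\varphi,\Lambda)$. Assume $\mathcal M_0^\ast\neq\emptyset$ and that for every $\Lambda^\ast\in\mathcal M_0^\ast$ the set $\{y:g_\Omega(y)=\int f_\theta(y)\,d\Lambda^\ast(\theta)\}$ has $\nu$-measure zero, so that $\Phi^\ast_{\Omega,\Lambda^\ast}$ has the $\nu$-a.e. unique element $\varphi^\ast_{\Omega,\Lambda^\ast}=\mathbb 1\{g_\Omega>\int f_\theta\,d\Lambda^\ast(\theta)\}$. Then for any $\Lambda_1^\ast,\Lambda_2^\ast\in\mathcal M_0^\ast$ and any $\tilde\varphi_1,\tilde\varphi_2\in\Phi^\ast_\Omega$, $\varphi^\ast_{\Omega,\Lambda_1^\ast}=\varphi^\ast_{\Omega,\Lambda_2^\ast}=\tilde\varphi_1=\tilde\varphi_2$ $\nu$-a.e. 5. If $\Lambda^\ast\in\mathcal M_0^\ast$ with $\Lambda^\ast(\Theta_0)>0$, then $\Lambda^\ast/\Lambda^\ast(\Theta_0)$ is a least favorable distribution for $g_\Omega$. 6. If a least favorable distribution $\Lambda^\ast_\Omega$ for $g_\Omega$ exists, then $\mathrm{cv}_\Omega\Lambda^\ast_\Omega\in\mathcal M_0^\ast$, where $\mathrm{cv}_\Omega$ is the critical value of the level-$\alpha$ Neyman–Pearson test of the density $\int f_\theta\,d\Lambda^\ast_\Omega(\theta)$ against $g_\Omega$.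
   Context: A random element $Y$ takes values in a metric space $\mathcal Y$ with density $f_\theta$ w.r.t. a $\sigma$-finite measure $\nu$, $\theta\in\Theta\subset\mathbb R^k$, $(\theta,y)\mapsto f_\theta(y)$ jointly measurable; $\Theta_0,\Theta_1\subset\Theta$ are disjoint Borel sets. $\Phi$ is the set of measurable $\varphi:\mathcal Y\to[0,1]$, $\Phi_\alpha=\{\varphi\in\Phi:\sup_{\theta\in\Theta_0}\int\varphi f_\theta\,d\nu\le\alpha\}$, $\varphi_{ah}\in\Phi_\alpha$ a fixed test. For an alternative density $g$ and a probability distribution $\Lambda$ on $\Theta_0$, write $h_\Lambda=\int f_\theta\,d\Lambda(\theta)$ and $\beta_\Lambda=\sup\{\int\varphi g\,d\nu:\varphi\in\Phi,\ \int\varphi h_\Lambda\,d\nu\le\alpha\}$; $\Lambda$ is a least favorable distribution (for $g$) if $\beta_\Lambda\le\beta_{\Lambda'}$ for all probability distributions $\Lambda'$ on $\Theta_0$. The level-$\alpha$ Neyman–Pearson test of $h_\Lambda$ against $g$ rejects when $g>\mathrm{cv}\,h_\Lambda$, randomizes with constant probability $\varkappa\in[0,1]$ on $g=\mathrm{cv}\,h_\Lambda$, with $\mathrm{cv}\ge0,\varkappa$ chosen so its rejection probability under $h_\Lambda$ equals $\alpha$. *)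

theory Defs
  imports "HOL-Probability.Probability"
begin

definition Phi :: "'y measure \<Rightarrow> ('y \<Rightarrow> real) set" where
  "Phi N = {\<phi> \<in> borel_measurable N. \<forall>y\<in>space N. 0 \<le> \<phi> y \<and> \<phi> y \<le> 1}"

definition Phi_alpha :: "'y measure \<Rightarrow> ('t \<Rightarrow> 'y \<Rightarrow> real) \<Rightarrow> 't set \<Rightarrow> real \<Rightarrow> ('y \<Rightarrow> real) set" where
  "Phi_alpha N f Theta0 \<alpha> = {\<phi> \<in> Phi N. \<forall>\<theta>\<in>Theta0. (\<integral>y. \<phi> y * f \<theta> y \<partial>N) \<le> \<alpha>}"

definition mix :: "'t measure \<Rightarrow> ('t \<Rightarrow> 'y \<Rightarrow> real) \<Rightarrow> 'y \<Rightarrow> real" where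
  "mix \<Lambda> f y = (\<integral>\<theta>. f \<theta> y \<partial>\<Lambda>)"

definition finite_measures_on :: "'t::topological_space set \<Rightarrow> 't measure set" where
  "finite_measures_on A = {\<Lambda>. sets \<Lambda> = sets (restrict_space borel A) \<and> finite_measure \<Lambda>}"

definition prob_distributions_on :: "'t::topological_space set \<Rightarrow> 't measure set" where
  "prob_distributions_on A = {\<Lambda>. sets \<Lambda> = sets (restrict_space borel A) \<and> prob_space \<Lambda>}"

definition beta_LF :: "'y measure \<Rightarrow> ('t \<Rightarrow> 'y \<Rightarrow> real) \<Rightarrow> real \<Rightarrow> ('y \<Rightarrow> real) \<Rightarrow> 't measure \<Rightarrow> real" where
  "beta_LF N f \<alpha> g \<Lambda> = Sup {(\<integral>y. \<phi> y * g y \<partial>N) | \<phi>. \<phi> \<in> Phi N \<and> (\<integral>y. \<phi> y * mix \<Lambda> f y \<partial>N) \<le> \<alpha>}"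

definition least_favorable ::
  "'y measure \<Rightarrow> ('t::topological_space \<Rightarrow> 'y \<Rightarrow> real) \<Rightarrow> 't set \<Rightarrow> real \<Rightarrow> ('y \<Rightarrow> real) \<Rightarrow> 't measure \<Rightarrow> bool" where
  "least_favorable N f Theta0 \<alpha> g \<Lambda> \<longleftrightarrow> \<Lambda> \<in> prob_distributions_on Theta0 \<and>
     (\<forall>\<Lambda>'\<in>prob_distributions_on Theta0. beta_LF N f \<alpha> g \<Lambda> \<le> beta_LF N f \<alpha> g \<Lambda>')"

definition NP_test :: "('y \<Rightarrow> real) \<Rightarrow> ('y \<Rightarrow> real) \<Rightarrow> real \<Rightarrow> real \<Rightarrow> 'y \<Rightarrow> real" where
  "NP_test h g cv \<kappa> y = (if g y > cv * h y then 1 else if g y = cv * h y then \<kappa> else 0)"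

definition is_level_NP :: "'y measure \<Rightarrow> real \<Rightarrow> ('y \<Rightarrow> real) \<Rightarrow> ('y \<Rightarrow> real) \<Rightarrow> real \<Rightarrow> real \<Rightarrow> bool" where
  "is_level_NP N \<alpha> h g cv \<kappa> \<longleftrightarrow> 0 \<le> cv \<and> 0 \<le> \<kappa> \<and> \<kappa> \<le> 1 \<and>
     (\<integral>y. NP_test h g cv \<kappa> y * h y \<partial>N) = \<alpha>"

definition objP :: "'y measure \<Rightarrow> ('y \<Rightarrow> real) \<Rightarrow> ('y \<Rightarrow> real) \<Rightarrow> ('y \<Rightarrow> real) \<Rightarrow> real" where
  "objP N \<phi>ah g \<phi> = (\<integral>y. (\<phi> y - \<phi>ah y) * g y \<partial>N)"

definition lagr :: "'y measure \<Rightarrow> ('t \<Rightarrow> 'y \<Rightarrow> real) \<Rightarrow> real \<Rightarrow> ('y \<Rightarrow> real) \<Rightarrow> ('y \<Rightarrow> real)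
    \<Rightarrow> ('y \<Rightarrow> real) \<Rightarrow> 't measure \<Rightarrow> real" where
  "lagr N f \<alpha> \<phi>ah g \<phi> \<Lambda> = objP N \<phi>ah g \<phi> - (\<integral>\<theta>. ((\<integral>y. \<phi> y * f \<theta> y \<partial>N) - \<alpha>) \<partial>\<Lambda>)"

definition dualf :: "'y measure \<Rightarrow> ('t \<Rightarrow> 'y \<Rightarrow> real) \<Rightarrow> real \<Rightarrow> ('y \<Rightarrow> real) \<Rightarrow> ('y \<Rightarrow> real)
    \<Rightarrow> 't measure \<Rightarrow> real" where
  "dualf N f \<alpha> \<phi>ah g \<Lambda> = (SUP \<phi>\<in>Phi N. lagr N f \<alpha> \<phi>ah g \<phi> \<Lambda>)"

end

theory Submission
  imports Defs
begin

definition comb :: "real \<Rightarrow> ('y \<Rightarrow> real) \<Rightarrow> ('y \<Rightarrow> real) \<Rightarrow> 'y \<Rightarrow> real" where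
  "comb t \<phi> \<psi> = (\<lambda>y. t * \<phi> y + (1 - t) * \<psi> y)"

definition cvx :: "('y \<Rightarrow> real) set \<Rightarrow> bool" where
  "cvx G \<longleftrightarrow> (\<forall>\<phi>\<in>G. \<forall>\<psi>\<in>G. \<forall>t. 0 \<le> t \<longrightarrow> t \<le> 1 \<longrightarrow> comb t \<phi> \<psi> \<in> G)"

definition aff :: "('y \<Rightarrow> real) set \<Rightarrow> (('y \<Rightarrow> real) \<Rightarrow> real) \<Rightarrow> bool" where
  "aff G J \<longleftrightarrow> (\<forall>\<phi>\<in>G. \<forall>\<psi>\<in>G. \<forall>t. 0 \<le> t \<longrightarrow> t \<le> 1 \<longrightarrow> J (comb t \<phi> \<psi>) = t * J \<phi> + (1 - t) * J \<psi>)"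

lemma comb_alg:
  fixes a b x y :: real assumes "a > 0" "b < 0"
  shows "(- b / (a - b)) * x + (1 - (- b / (a - b))) * y = ((- b) * x + a * y) / (a - b)"
proof -
  have d: "a - b > 0" using assms by simp
  have "1 - (- b / (a - b)) = a / (a - b)" using d by (simp add: field_simps)
  thus ?thesis by (simp add: add_divide_distrib diff_divide_distrib)
qed

lemma one_dual_aux:
  assumes G: "cvx G" and J: "aff G J" and c: "aff G c"
    and V: "\<And>\<phi>. \<phi> \<in> G \<Longrightarrow> c \<phi> \<le> 0 \<Longrightarrow> J \<phi> \<le> V"
    and p1: "\<phi>1 \<in> G" "c \<phi>1 > 0" and p2: "\<phi>2 \<in> G" "c \<phi>2 < 0"
  shows "(J \<phi>1 - V) / c \<phi>1 \<le> (V - J \<phi>2) / (- c \<phi>2)"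
proof -
  define t where "t = - c \<phi>2 / (c \<phi>1 - c \<phi>2)"
  have t01: "0 \<le> t" "t \<le> 1" using p1 p2 by (auto simp: t_def field_simps)
  have mem: "comb t \<phi>1 \<phi>2 \<in> G" using G p1 p2 t01 unfolding cvx_def by blast
  have "c (comb t \<phi>1 \<phi>2) = t * c \<phi>1 + (1 - t) * c \<phi>2" using c p1 p2 t01 unfolding aff_def by blast
  also have "\<dots> = 0" using p1 p2 by (simp add: t_def field_simps)
  finally have "J (comb t \<phi>1 \<phi>2) \<le> V" using V mem by simp
  moreover have "J (comb t \<phi>1 \<phi>2) = t * J \<phi>1 + (1 - t) * J \<phi>2" using J p1 p2 t01 unfolding aff_def by blast
  ultimately have "t * J \<phi>1 + (1 - t) * J \<phi>2 \<le> V" by simp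
  moreover have "t * J \<phi>1 + (1 - t) * J \<phi>2 = ((- c \<phi>2) * J \<phi>1 + c \<phi>1 * J \<phi>2) / (c \<phi>1 - c \<phi>2)"
    unfolding t_def using p1 p2 by (intro comb_alg) auto
  ultimately have "((- c \<phi>2) * J \<phi>1 + c \<phi>1 * J \<phi>2) / (c \<phi>1 - c \<phi>2) \<le> V"
    by simp
  hence "(- c \<phi>2) * J \<phi>1 + c \<phi>1 * J \<phi>2 \<le> V * (c \<phi>1 - c \<phi>2)"
    using p1 p2 by (simp add: divide_le_eq)
  hence "(- c \<phi>2) * (J \<phi>1 - V) \<le> c \<phi>1 * (V - J \<phi>2)" by (simp add: algebra_simps)
  thus ?thesis using p1 p2 by (simp add: field_simps)
qed

lemma one_dual:
  assumes G: "cvx G" and J: "aff G J" and c: "aff G c"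
    and V: "\<And>\<phi>. \<phi> \<in> G \<Longrightarrow> c \<phi> \<le> 0 \<Longrightarrow> J \<phi> \<le> V"
    and x0: "x0 \<in> G" "c x0 < 0"
  shows "\<exists>\<mu>\<ge>0. \<forall>\<phi>\<in>G. J \<phi> - \<mu> * c \<phi> \<le> V"
proof -
  define A where "A = {(J \<phi> - V) / c \<phi> | \<phi>. \<phi> \<in> G \<and> c \<phi> > 0}"
  have Abd: "a \<le> (V - J \<phi>2) / (- c \<phi>2)" if "a \<in> A" "\<phi>2 \<in> G" "c \<phi>2 < 0" for a \<phi>2
    using that one_dual_aux[OF G J c V] unfolding A_def by blast
  define \<mu> where "\<mu> = (if A = {} then 0 else max 0 (Sup A))"
  have bdd: "bdd_above A" using Abd x0 unfolding bdd_above_def by blast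
  have "J \<phi> - \<mu> * c \<phi> \<le> V" if \<phi>: "\<phi> \<in> G" for \<phi>
  proof (cases "c \<phi> > 0")
    case True
    hence "(J \<phi> - V) / c \<phi> \<in> A" using \<phi> unfolding A_def by blast
    hence "(J \<phi> - V) / c \<phi> \<le> \<mu>" using bdd unfolding \<mu>_def by (auto intro: cSup_upper max.coboundedI2)
    thus ?thesis using True by (simp add: field_simps)
  next
    case False
    have m0: "0 \<le> \<mu>" unfolding \<mu>_def by simp
    show ?thesis
    proof (cases "c \<phi> = 0")
      case True thus ?thesis using V \<phi> by simp
    next
      case False
      hence neg: "c \<phi> < 0" using \<open>\<not> c \<phi> > 0\<close> by simp
      have JV: "J \<phi> \<le> V" using V \<phi> neg by simp
      have "\<mu> \<le> (V - J \<phi>) / (- c \<phi>)"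
      proof (cases "A = {}")
        case True
        have "0 \<le> (V - J \<phi>) / (- c \<phi>)" using JV neg by (intro divide_nonneg_pos) auto
        thus ?thesis using True unfolding \<mu>_def by simp
      next
        case False
        have "Sup A \<le> (V - J \<phi>) / (- c \<phi>)" using False Abd[OF _ \<phi> neg] by (intro cSup_least) auto
        moreover have "0 \<le> (V - J \<phi>) / (- c \<phi>)" using JV neg by (intro divide_nonneg_pos) auto
        ultimately show ?thesis using False unfolding \<mu>_def by simp
      qed
      thus ?thesis using neg by (simp add: field_simps)
    qed
  qed
  moreover have "0 \<le> \<mu>" unfolding \<mu>_def by simp
  ultimately show ?thesis by blast
qed

lemma aff_diff:
  assumes "aff G J" "aff G c"
  shows "aff G (\<lambda>\<phi>. J \<phi> - m * c \<phi>)"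
  unfolding aff_def
proof (intro ballI allI impI)
  fix \<phi> \<psi> t assume h: "\<phi> \<in> G" "\<psi> \<in> G" "0 \<le> (t::real)" "t \<le> 1"
  have "J (comb t \<phi> \<psi>) = t * J \<phi> + (1 - t) * J \<psi>" "c (comb t \<phi> \<psi>) = t * c \<phi> + (1 - t) * c \<psi>"
    using assms h unfolding aff_def by blast+
  note e = this
  show "J (comb t \<phi> \<psi>) - m * c (comb t \<phi> \<psi>) = t * (J \<phi> - m * c \<phi>) + (1 - t) * (J \<psi> - m * c \<psi>)"
    unfolding e by (simp add: algebra_simps)
qed

lemma fin_dual:
  fixes J :: "('y \<Rightarrow> real) \<Rightarrow> real" and c :: "'i \<Rightarrow> ('y \<Rightarrow> real) \<Rightarrow> real" and V :: real
  assumes fin: "finite F" and G: "cvx G" and x0: "x0 \<in> G" "\<And>i. i \<in> F \<Longrightarrow> c i x0 < 0"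
    and c: "\<And>i. i \<in> F \<Longrightarrow> aff G (c i)"
  shows "aff G J \<Longrightarrow> (\<And>\<phi>. \<phi> \<in> G \<Longrightarrow> (\<forall>i\<in>F. c i \<phi> \<le> 0) \<Longrightarrow> J \<phi> \<le> V) \<Longrightarrow>
    \<exists>lm. (\<forall>i\<in>F. 0 \<le> lm i) \<and> (\<forall>\<phi>\<in>G. J \<phi> - (\<Sum>i\<in>F. lm i * c i \<phi>) \<le> V)"
  using fin x0(2) c
proof (induction F arbitrary: J rule: finite_induct)
  case empty thus ?case by auto
next
  case (insert a F)
  define G' where "G' = {\<phi>\<in>G. \<forall>i\<in>F. c i \<phi> \<le> 0}"
  have G': "cvx G'" using G insert.prems(4) unfolding G'_def cvx_def aff_def
    by (auto simp: add_nonpos_nonpos mult_nonneg_nonpos)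
  have affG': "aff G' K" if "aff G K" for K using that unfolding aff_def G'_def by auto
  have x0': "x0 \<in> G'" using x0 insert.prems(3) unfolding G'_def by (auto intro: less_imp_le)
  have ca: "aff G (c a)" using insert.prems(4) by simp
  have "\<exists>\<mu>\<ge>0. \<forall>\<phi>\<in>G'. J \<phi> - \<mu> * c a \<phi> \<le> V"
  proof (rule one_dual[OF G' affG'[OF insert.prems(1)] affG'[OF ca]])
    show "J \<phi> \<le> V" if "\<phi> \<in> G'" "c a \<phi> \<le> 0" for \<phi> using that insert.prems(2) unfolding G'_def by auto
    show "x0 \<in> G'" by (rule x0')
    show "c a x0 < 0" using insert.prems(3) by simp
  qed
  then obtain \<mu> where \<mu>: "\<mu> \<ge> 0" "\<forall>\<phi>\<in>G'. J \<phi> - \<mu> * c a \<phi> \<le> V" by blast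
  obtain lm where lm: "\<forall>i\<in>F. 0 \<le> lm i" "\<forall>\<phi>\<in>G. (J \<phi> - \<mu> * c a \<phi>) - (\<Sum>i\<in>F. lm i * c i \<phi>) \<le> V"
    using insert.IH[of "\<lambda>\<phi>. J \<phi> - \<mu> * c a \<phi>"] aff_diff[OF insert.prems(1) insert.prems(4)] \<mu>(2)
      insert.prems(3,4) unfolding G'_def by auto
  define lm' where "lm' = lm(a := \<mu>)"
  have "(\<Sum>i\<in>insert a F. lm' i * c i \<phi>) = \<mu> * c a \<phi> + (\<Sum>i\<in>F. lm i * c i \<phi>)" for \<phi>
    using insert.hyps unfolding lm'_def by (simp add: sum.insert) (intro sum.cong, auto)
  thus ?case using lm \<mu>(1) unfolding lm'_def by (intro exI[of _ "lm(a := \<mu>)"]) (auto simp: algebra_simps)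
qed

lemma Phi_D: "\<phi> \<in> Phi M \<Longrightarrow> \<phi> \<in> borel_measurable M"
  "\<phi> \<in> Phi M \<Longrightarrow> y \<in> space M \<Longrightarrow> 0 \<le> \<phi> y" "\<phi> \<in> Phi M \<Longrightarrow> y \<in> space M \<Longrightarrow> \<phi> y \<le> 1"
  unfolding Phi_def by auto

lemma Phi_comb: "\<phi> \<in> Phi M \<Longrightarrow> \<psi> \<in> Phi M \<Longrightarrow> 0 \<le> t \<Longrightarrow> t \<le> 1 \<Longrightarrow> comb t \<phi> \<psi> \<in> Phi M"
proof -
  assume a: "\<phi> \<in> Phi M" "\<psi> \<in> Phi M" "0 \<le> t" "t \<le> 1"
  have "t * \<phi> y + (1 - t) * \<psi> y \<le> t * 1 + (1 - t) * 1" if "y \<in> space M" for y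
    using a that by (intro add_mono mult_left_mono) (auto simp: Phi_def)
  moreover have "0 \<le> t * \<phi> y + (1 - t) * \<psi> y" if "y \<in> space M" for y
    using a that by (intro add_nonneg_nonneg mult_nonneg_nonneg) (auto simp: Phi_def)
  ultimately show ?thesis using a unfolding Phi_def comb_def by auto
qed

lemma cvx_Phi: "cvx (Phi M)" unfolding cvx_def using Phi_comb by blast

context finite_measure
begin

lemma bdd_integrable: fixes f :: "'a \<Rightarrow> real" shows "f \<in> borel_measurable M \<Longrightarrow> (\<And>y. y \<in> space M \<Longrightarrow> \<bar>f y\<bar> \<le> B) \<Longrightarrow> integrable M f"
  by (intro integrable_const_bound[where B=B]) auto

definition Q :: "('a \<Rightarrow> real) \<Rightarrow> real" where "Q \<phi> = (\<integral>y. (\<phi> y)\<^sup>2 \<partial>M)"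

lemma sq_integrable: fixes \<phi> :: "'a \<Rightarrow> real" shows "\<phi> \<in> borel_measurable M \<Longrightarrow> (\<And>y. y \<in> space M \<Longrightarrow> \<bar>\<phi> y\<bar> \<le> B) \<Longrightarrow> integrable M (\<lambda>y. (\<phi> y)\<^sup>2)"
proof -
  assume a: "\<phi> \<in> borel_measurable M" "\<And>y. y \<in> space M \<Longrightarrow> \<bar>\<phi> y\<bar> \<le> B"
  have "\<bar>(\<phi> y)\<^sup>2\<bar> \<le> B\<^sup>2" if "y \<in> space M" for y
  proof -
    have "\<bar>(\<phi> y)\<^sup>2\<bar> = \<bar>\<phi> y\<bar>\<^sup>2" by simp
    also have "\<dots> \<le> B\<^sup>2" using a(2)[OF that] by (intro power_mono) auto
    finally show ?thesis .
  qed
  thus ?thesis using a(1) by (intro bdd_integrable[where B="B\<^sup>2"]) auto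
qed

lemma Q_nonneg: "0 \<le> Q \<phi>" unfolding Q_def by simp

lemma Q_le: "\<phi> \<in> Phi M \<Longrightarrow> Q \<phi> \<le> measure M (space M)"
proof -
  assume a: "\<phi> \<in> Phi M"
  have "Q \<phi> \<le> (\<integral>y. 1 \<partial>M)" unfolding Q_def
    using a by (intro integral_mono sq_integrable[where B=1]) (auto simp: Phi_def abs_le_iff power_le_one)
  thus ?thesis by simp
qed

lemma Q_par:
  assumes "\<phi> \<in> Phi M" "\<psi> \<in> Phi M"
  shows "Q (\<lambda>y. \<phi> y - \<psi> y) = 2 * Q \<phi> + 2 * Q \<psi> - 4 * Q (comb (1/2) \<phi> \<psi>)"
proof -
  have i1: "integrable M (\<lambda>y. (\<phi> y)\<^sup>2)" "integrable M (\<lambda>y. (\<psi> y)\<^sup>2)"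
    "integrable M (\<lambda>y. (comb (1/2) \<phi> \<psi> y)\<^sup>2)"
    using assms Phi_comb[OF assms, of "1/2"] by (auto intro!: sq_integrable[where B=1] simp: Phi_def abs_le_iff)
  have "Q (\<lambda>y. \<phi> y - \<psi> y) = (\<integral>y. 2 * (\<phi> y)\<^sup>2 + 2 * (\<psi> y)\<^sup>2 - 4 * (comb (1/2) \<phi> \<psi> y)\<^sup>2 \<partial>M)"
    unfolding Q_def comb_def by (intro Bochner_Integration.integral_cong) (auto simp: power2_eq_square algebra_simps)
  also have "\<dots> = 2 * Q \<phi> + 2 * Q \<psi> - 4 * Q (comb (1/2) \<phi> \<psi>)"
    unfolding Q_def using i1 by simp
  finally show ?thesis .
qed

lemma L1_bound:
  assumes "h \<in> borel_measurable M" "\<And>y. y \<in> space M \<Longrightarrow> \<bar>h y\<bar> \<le> 2" "e > 0"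
  shows "(\<integral>y. \<bar>h y\<bar> \<partial>M) \<le> e * measure M (space M) + Q h / e"
proof -
  have pw: "\<bar>x\<bar> \<le> e + x\<^sup>2 / e" for x :: real
  proof (cases "\<bar>x\<bar> \<le> e")
    case True thus ?thesis using assms(3) by (simp add: add_increasing2)
  next
    case False
    hence "\<bar>x\<bar> * e \<le> \<bar>x\<bar> * \<bar>x\<bar>" by (intro mult_left_mono) auto
    hence "\<bar>x\<bar> \<le> x\<^sup>2 / e" using assms(3) by (simp add: field_simps power2_eq_square abs_mult_self_eq)
    thus ?thesis using assms(3) by simp
  qed
  have ih: "integrable M (\<lambda>y. (h y)\<^sup>2)" using assms by (intro sq_integrable[where B=2]) auto
  have "(\<integral>y. \<bar>h y\<bar> \<partial>M) \<le> (\<integral>y. e + (h y)\<^sup>2 / e \<partial>M)"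
  proof (rule integral_mono)
    show "integrable M (\<lambda>y. \<bar>h y\<bar>)" using assms by (intro bdd_integrable[where B=2]) auto
    show "integrable M (\<lambda>y. e + (h y)\<^sup>2 / e)" using ih by simp
    show "\<bar>h y\<bar> \<le> e + (h y)\<^sup>2 / e" for y by (rule pw)
  qed
  also have "\<dots> = e * measure M (space M) + Q h / e" unfolding Q_def using ih by simp
  finally show ?thesis .
qed

end

context finite_measure
begin

lemma L1_eps:
  assumes r: "0 < r"
  shows "\<exists>n0. \<forall>n\<ge>n0. \<forall>h. h \<in> borel_measurable M \<longrightarrow> (\<forall>y\<in>space M. \<bar>h y\<bar> \<le> 2) \<longrightarrow>
     Q h \<le> 6 / (real n + 1) \<longrightarrow> (\<integral>y. \<bar>h y\<bar> \<partial>M) < r"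
proof -
  define m where "m = measure M (space M)"
  define e where "e = r / (2 * (m + 1))"
  have m0: "0 \<le> m" unfolding m_def by simp
  have e0: "0 < e" unfolding e_def using r m0 by simp
  have em: "e * m < r / 2" unfolding e_def using r m0 by (simp add: field_simps)
  obtain n0 :: nat where n0: "12 / (e * r) < real n0" using reals_Archimedean2 by blast
  have "(\<integral>y. \<bar>h y\<bar> \<partial>M) < r" if "n \<ge> n0" "h \<in> borel_measurable M" "\<forall>y\<in>space M. \<bar>h y\<bar> \<le> 2"
     "Q h \<le> 6 / (real n + 1)" for n h
  proof -
    have "12 / (e * r) < real n + 1" using n0 that by linarith
    hence "12 < (real n + 1) * (e * r)" using e0 r by (simp add: field_simps)
    hence "6 < r / 2 * ((real n + 1) * e)" by (simp add: algebra_simps)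
    hence "6 / ((real n + 1) * e) < r / 2" using e0 by (subst pos_divide_less_eq) auto
    hence "6 / (real n + 1) / e < r / 2" by (simp add: divide_divide_eq_left)
    moreover have "Q h / e \<le> 6 / (real n + 1) / e" using that e0 by (intro divide_right_mono) auto
    moreover have "(\<integral>y. \<bar>h y\<bar> \<partial>M) \<le> e * m + Q h / e" unfolding m_def using that e0 by (intro L1_bound) auto
    ultimately show ?thesis using em by simp
  qed
  thus ?thesis by blast
qed

lemma L1_small:
  assumes "\<And>n. u n \<in> borel_measurable M" "\<And>n y. y \<in> space M \<Longrightarrow> \<bar>u n y\<bar> \<le> 2"
    and "\<And>n. Q (u n) \<le> 6 / (real n + 1)"
  shows "(\<lambda>n. (\<integral>y. \<bar>u n y\<bar> \<partial>M)) \<longlonglongrightarrow> 0"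
proof (rule LIMSEQ_I)
  fix r :: real assume r: "0 < r"
  from L1_eps[OF r] obtain n0 where n0: "\<forall>n\<ge>n0. \<forall>h. h \<in> borel_measurable M \<longrightarrow> (\<forall>y\<in>space M. \<bar>h y\<bar> \<le> 2) \<longrightarrow>
     Q h \<le> 6 / (real n + 1) \<longrightarrow> (\<integral>y. \<bar>h y\<bar> \<partial>M) < r" by blast
  have "norm ((\<integral>y. \<bar>u n y\<bar> \<partial>M) - 0) < r" if "n \<ge> n0" for n
    using n0[rule_format, OF that, of "u n"] assms by auto
  thus "\<exists>no. \<forall>n\<ge>no. norm ((\<integral>y. \<bar>u n y\<bar> \<partial>M) - 0) < r" by blast
qed

lemma directed_inter:
  fixes K :: "'i \<Rightarrow> ('a \<Rightarrow> real) set"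
  assumes sub: "\<And>i. K i \<subseteq> Phi M" and ne: "\<And>i. K i \<noteq> {}" and cv: "\<And>i. cvx (K i)"
    and cl: "\<And>i s \<phi>. (\<And>n. s n \<in> K i) \<Longrightarrow> \<phi> \<in> Phi M \<Longrightarrow> (AE y in M. (\<lambda>n. s n y) \<longlonglongrightarrow> \<phi> y) \<Longrightarrow> \<phi> \<in> K i"
    and dir: "\<And>i j. \<exists>k. K k \<subseteq> K i \<inter> K j"
  shows "\<exists>\<phi>. \<forall>i. \<phi> \<in> K i"
proof -
  define m where "m = measure M (space M)"
  define d where "d i = Inf (Q ` K i)" for i
  have bb: "bdd_below (Q ` K i)" for i using Q_nonneg by (intro bdd_belowI[of _ 0]) auto
  have dle: "d i \<le> Q \<phi>" if "\<phi> \<in> K i" for i \<phi> unfolding d_def using bb that by (intro cInf_lower) auto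
  have dm: "d i \<le> m" for i
  proof -
    obtain \<phi> where "\<phi> \<in> K i" using ne by blast
    thus ?thesis using dle[of \<phi> i] Q_le[of \<phi>] sub unfolding m_def by force
  qed
  have dmono: "d i \<le> d k" if "K k \<subseteq> K i" for i k
    unfolding d_def using ne[of k] bb[of i] that by (intro cInf_superset_mono) auto
  have dex: "\<exists>\<phi>\<in>K i. Q \<phi> < d i + e" if "e > 0" for i e
  proof -
    have "Inf (Q ` K i) < d i + e" using that unfolding d_def by simp
    from cInf_lessD[OF _ this] ne[of i] show ?thesis by auto
  qed
  define D where "D = Sup (range d)"
  have bd: "bdd_above (range d)" using dm by (intro bdd_aboveI[of _ m]) auto
  have dD: "d i \<le> D" for i unfolding D_def using bd by (intro cSup_upper) auto
  have "\<exists>j. D - 1 / (real n + 1) < d j" for n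
  proof -
    have "D - 1 / (real n + 1) < Sup (range d)" unfolding D_def by simp
    from less_cSupD[OF _ this] show ?thesis by auto
  qed
  then obtain js where js: "\<And>n. D - 1 / (real n + 1) < d (js n)" by metis
  define kk where "kk i j = (SOME k. K k \<subseteq> K i \<inter> K j)" for i j
  have kk: "K (kk i j) \<subseteq> K i \<inter> K j" for i j unfolding kk_def using dir someI_ex by metis
  define iq where "iq = rec_nat (js 0) (\<lambda>n i. kk i (js (Suc n)))"
  have is0: "iq 0 = js 0" and isS: "iq (Suc n) = kk (iq n) (js (Suc n))" for n unfolding iq_def by simp_all
  have chain1: "K (iq (Suc n)) \<subseteq> K (iq n)" for n using kk isS by auto
  have chain: "K (iq b) \<subseteq> K (iq a)" if "a \<le> b" for a b
    using that by (induction b rule: dec_induct) (use chain1 in auto)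
  have isj: "K (iq n) \<subseteq> K (js n)" for n by (cases n) (use is0 isS kk in auto)
  have dis: "D - 1 / (real n + 1) < d (iq n)" for n using js[of n] dmono[OF isj[of n]] by simp
  have key: "Q (\<lambda>y. \<phi> y - \<psi> y) \<le> 2 * Q \<phi> + 2 * Q \<psi> - 4 * d i" if "\<phi> \<in> K i" "\<psi> \<in> K i" for \<phi> \<psi> i
  proof -
    have "comb (1/2) \<phi> \<psi> \<in> K i" using cv[of i] that unfolding cvx_def by auto
    hence "d i \<le> Q (comb (1/2) \<phi> \<psi>)" by (rule dle)
    moreover have "\<phi> \<in> Phi M" "\<psi> \<in> Phi M" using that sub by auto
    ultimately show ?thesis using Q_par[of \<phi> \<psi>] by linarith
  qed
  have diffb: "\<bar>\<phi> y - \<psi> y\<bar> \<le> 2" if "\<phi> \<in> Phi M" "\<psi> \<in> Phi M" "y \<in> space M" for \<phi> \<psi> y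
  proof -
    have "0 \<le> \<phi> y" "\<phi> y \<le> 1" "0 \<le> \<psi> y" "\<psi> y \<le> 1" using that unfolding Phi_def by auto
    thus ?thesis by linarith
  qed
  have pos: "0 < 1 / (real n + 1)" for n :: nat by simp
  have "\<forall>n. \<exists>\<phi>. \<phi> \<in> K (iq n) \<and> Q \<phi> < d (iq n) + 1 / (real n + 1)" using dex[OF pos] by blast
  from choice[OF this] obtain \<psi> where \<psi>: "\<And>n. \<psi> n \<in> K (iq n)" "\<And>n. Q (\<psi> n) < d (iq n) + 1 / (real n + 1)"
    by blast
  have \<psi>Phi: "\<psi> n \<in> Phi M" for n using \<psi>(1) sub by blast
  have \<psi>m[measurable]: "\<psi> n \<in> borel_measurable M" for n using \<psi>Phi by (auto simp: Phi_def)
  have cauchyQ: "Q (\<lambda>y. \<psi> a y - \<psi> b y) \<le> 6 / (real n + 1)" if "n \<le> a" "a \<le> b" for n a b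
  proof -
    have "\<psi> b \<in> K (iq a)" using chain[OF that(2)] \<psi>(1) by auto
    hence "Q (\<lambda>y. \<psi> a y - \<psi> b y) \<le> 2 * Q (\<psi> a) + 2 * Q (\<psi> b) - 4 * d (iq a)" using key \<psi>(1) by blast
    also have "\<dots> \<le> 2 * (d (iq a) + 1 / (real a + 1)) + 2 * (D + 1 / (real b + 1)) - 4 * d (iq a)"
      using \<psi>(2)[of a] \<psi>(2)[of b] dD[of "iq b"] by simp
    also have "\<dots> \<le> 6 / (real n + 1)"
    proof -
      have "1 / (real a + 1) \<le> 1 / (real n + 1)" "1 / (real b + 1) \<le> 1 / (real n + 1)"
        using that by (auto simp: frac_le)
      thus ?thesis using dis[of a] by simp
    qed
    finally show ?thesis .
  qed
  have cauchyQ2: "Q (\<lambda>y. \<psi> a y - \<psi> b y) \<le> 6 / (real n + 1)" if "n \<le> a" "n \<le> b" for n a b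
  proof (cases "a \<le> b")
    case True thus ?thesis using cauchyQ that by blast
  next
    case False
    have "Q (\<lambda>y. \<psi> a y - \<psi> b y) = Q (\<lambda>y. \<psi> b y - \<psi> a y)" unfolding Q_def
      by (simp add: power2_commute)
    thus ?thesis using cauchyQ[of n b a] that False by simp
  qed
  have int\<psi>: "integrable M (\<psi> n)" for n using \<psi>Phi[of n] by (intro bdd_integrable[where B=1]) (auto simp: Phi_def)
  have cauchyL1: "\<exists>N. \<forall>i\<ge>N. \<forall>j\<ge>N. (LINT y|M. norm (\<psi> i y - \<psi> j y)) < e" if e0: "e > 0" for e
  proof -
    obtain n0 where n0: "\<forall>n\<ge>n0. \<forall>h. h \<in> borel_measurable M \<longrightarrow> (\<forall>y\<in>space M. \<bar>h y\<bar> \<le> 2) \<longrightarrow>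
       Q h \<le> 6 / (real n + 1) \<longrightarrow> (\<integral>y. \<bar>h y\<bar> \<partial>M) < e" using L1_eps[OF e0] by blast
    have "(LINT y|M. norm (\<psi> i y - \<psi> j y)) < e" if "i \<ge> n0" "j \<ge> n0" for i j
    proof -
      have m: "(\<lambda>y. \<psi> i y - \<psi> j y) \<in> borel_measurable M" using \<psi>Phi[of i] \<psi>Phi[of j] by (auto simp: Phi_def)
      have b: "\<And>y. y \<in> space M \<Longrightarrow> \<bar>\<psi> i y - \<psi> j y\<bar> \<le> 2" using diffb[OF \<psi>Phi \<psi>Phi] by blast
      have "(\<integral>y. \<bar>\<psi> i y - \<psi> j y\<bar> \<partial>M) < e"
        using n0[rule_format, OF order.refl m b cauchyQ2[OF that]] .
      thus ?thesis by simp
    qed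
    thus ?thesis by blast
  qed
  obtain r where r: "strict_mono r" "AE y in M. Cauchy (\<lambda>n. \<psi> (r n) y)"
    using cauchy_L1_AE_cauchy_subseq[OF int\<psi> cauchyL1] by blast
  define \<psi>l where "\<psi>l y = max 0 (min 1 (lim (\<lambda>n. \<psi> (r n) y)))" for y
  have \<psi>lPhi: "\<psi>l \<in> Phi M"
  proof -
    have [measurable]: "\<psi> n \<in> borel_measurable M" for n using \<psi>Phi by (auto simp: Phi_def)
    have "\<psi>l \<in> borel_measurable M" unfolding \<psi>l_def by measurable
    thus ?thesis unfolding Phi_def \<psi>l_def by auto
  qed
  have conv: "AE y in M. (\<lambda>n. \<psi> (r n) y) \<longlonglongrightarrow> \<psi>l y"
    using r(2)
  proof (rule AE_mp)
    show "AE y in M. Cauchy (\<lambda>n. \<psi> (r n) y) \<longrightarrow> (\<lambda>n. \<psi> (r n) y) \<longlonglongrightarrow> \<psi>l y"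
    proof (rule AE_I2, rule impI)
      fix y assume y: "y \<in> space M" and c: "Cauchy (\<lambda>n. \<psi> (r n) y)"
      hence l: "(\<lambda>n. \<psi> (r n) y) \<longlonglongrightarrow> lim (\<lambda>n. \<psi> (r n) y)" using Cauchy_convergent convergent_LIMSEQ_iff by blast
      have "0 \<le> lim (\<lambda>n. \<psi> (r n) y)" using \<psi>Phi y by (intro LIMSEQ_le_const[OF l]) (auto simp: Phi_def)
      moreover have "lim (\<lambda>n. \<psi> (r n) y) \<le> 1" using \<psi>Phi y by (intro LIMSEQ_le_const2[OF l]) (auto simp: Phi_def)
      ultimately have "\<psi>l y = lim (\<lambda>n. \<psi> (r n) y)" unfolding \<psi>l_def by simp
      thus "(\<lambda>n. \<psi> (r n) y) \<longlonglongrightarrow> \<psi>l y" using l by simp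
    qed
  qed
  have inA: "\<psi>l \<in> K (iq n)" for n
  proof (rule cl[OF _ \<psi>lPhi])
    fix k
    have "n \<le> r (k + n)" using seq_suble[OF r(1), of "k + n"] by simp
    thus "\<psi> (r (k + n)) \<in> K (iq n)" using chain \<psi>(1) by blast
  next
    show "AE y in M. (\<lambda>k. \<psi> (r (k + n)) y) \<longlonglongrightarrow> \<psi>l y"
      using conv by eventually_elim (rule LIMSEQ_ignore_initial_segment)
  qed
  have "\<psi>l \<in> K j" for j
  proof -
    define i2 where "i2 n = kk (iq n) j" for n
    have "\<forall>n. \<exists>\<phi>. \<phi> \<in> K (i2 n) \<and> Q \<phi> < d (i2 n) + 1 / (real n + 1)" using dex[OF pos] by blast
    from choice[OF this] obtain ch where ch: "\<And>n. ch n \<in> K (i2 n)" "\<And>n. Q (ch n) < d (i2 n) + 1 / (real n + 1)"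
      by blast
    have chj: "ch n \<in> K j" and chi: "ch n \<in> K (iq n)" for n using ch(1) kk unfolding i2_def by blast+
    have chPhi: "ch n \<in> Phi M" for n using chj sub by blast
    have chm[measurable]: "ch n \<in> borel_measurable M" for n using chPhi by (auto simp: Phi_def)
    have Qc: "Q (\<lambda>y. ch n y - \<psi> n y) \<le> 6 / (real n + 1)" for n
    proof -
      have "Q (\<lambda>y. ch n y - \<psi> n y) \<le> 2 * Q (ch n) + 2 * Q (\<psi> n) - 4 * d (iq n)" using key \<psi>(1) chi by blast
      also have "\<dots> \<le> 2 * (D + 1 / (real n + 1)) + 2 * (d (iq n) + 1 / (real n + 1)) - 4 * d (iq n)"
        using \<psi>(2)[of n] ch(2)[of n] dD[of "i2 n"] by simp
      also have "\<dots> \<le> 6 / (real n + 1)" using dis[of n] by simp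
      finally show ?thesis .
    qed
    define u where "u n y = ch (r n) y - \<psi> (r n) y" for n y
    have um: "u n \<in> borel_measurable M" for n unfolding u_def by measurable
    have ui: "integrable M (u n)" for n
      using um diffb[OF chPhi \<psi>Phi] unfolding u_def by (intro bdd_integrable[where B=2]) auto
    have "(\<lambda>n. (\<integral>y. \<bar>ch n y - \<psi> n y\<bar> \<partial>M)) \<longlonglongrightarrow> 0"
      using Qc chPhi \<psi>Phi diffb[OF chPhi \<psi>Phi] by (intro L1_small) (auto simp: Phi_def)
    from LIMSEQ_subseq_LIMSEQ[OF this r(1)]
    have "(\<lambda>n. (\<integral>y. norm (u n y) \<partial>M)) \<longlonglongrightarrow> 0" unfolding u_def o_def by simp
    from tendsto_L1_AE_subseq[OF ui this] obtain s where s: "strict_mono s" "AE y in M. (\<lambda>n. u (s n) y) \<longlonglongrightarrow> 0"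
      by blast
    show ?thesis
    proof (rule cl[OF _ \<psi>lPhi])
      show "ch (r (s n)) \<in> K j" for n using chj by blast
      show "AE y in M. (\<lambda>n. ch (r (s n)) y) \<longlonglongrightarrow> \<psi>l y"
        using s(2) conv
      proof eventually_elim
        case (elim y)
        have "(\<lambda>n. \<psi> (r (s n)) y) \<longlonglongrightarrow> \<psi>l y"
          using LIMSEQ_subseq_LIMSEQ[OF elim(2) s(1)] by (simp add: o_def)
        from tendsto_add[OF elim(1) this] show ?case unfolding u_def by simp
      qed
    qed
  qed
  thus ?thesis by blast
qed

end

locale dens =
  fixes N :: "'y measure" and f :: "'t::topological_space \<Rightarrow> 'y \<Rightarrow> real" and Theta :: "'t set"
  assumes sigma_fin: "sigma_finite_measure N"
    and joint_meas: "(\<lambda>p. f (fst p) (snd p)) \<in> borel_measurable (restrict_space (borel \<Otimes>\<^sub>M N) (Theta \<times> space N))"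
    and dens_nonneg: "\<And>\<theta> y. \<theta> \<in> Theta \<Longrightarrow> y \<in> space N \<Longrightarrow> 0 \<le> f \<theta> y"
    and dens_one: "\<And>\<theta>. \<theta> \<in> Theta \<Longrightarrow> (\<integral>\<^sup>+ y. ennreal (f \<theta> y) \<partial>N) = 1"
begin

lemma fmeas: assumes "\<theta> \<in> Theta" shows "f \<theta> \<in> borel_measurable N"
proof -
  have "(\<lambda>y. (\<theta>, y)) \<in> N \<rightarrow>\<^sub>M restrict_space (borel \<Otimes>\<^sub>M N) (Theta \<times> space N)"
    using assms by (intro measurable_restrict_space2) auto
  from measurable_compose[OF this joint_meas] show ?thesis by simp
qed

lemma fint: assumes "\<theta> \<in> Theta" shows "integrable N (f \<theta>)" and "(\<integral>y. f \<theta> y \<partial>N) = 1"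
proof -
  have "integrable N (f \<theta>)"
    using fmeas[OF assms] dens_one[OF assms] dens_nonneg[OF assms]
    by (intro integrableI_nonneg) (auto intro: AE_I2)
  thus "integrable N (f \<theta>)" .
  have "(\<integral>y. f \<theta> y \<partial>N) = enn2real (\<integral>\<^sup>+ y. ennreal (f \<theta> y) \<partial>N)"
    using fmeas[OF assms] dens_nonneg[OF assms] by (intro integral_eq_nn_integral) (auto intro: AE_I2)
  thus "(\<integral>y. f \<theta> y \<partial>N) = 1" using dens_one[OF assms] by simp
qed

definition admissible :: "'t measure \<Rightarrow> bool" where
  "admissible L \<longleftrightarrow> (\<exists>A. A \<subseteq> Theta \<and> sets L = sets (restrict_space borel A)) \<and> finite_measure L"

lemma adm_space: assumes "admissible L" shows "space L \<subseteq> Theta"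
proof -
  obtain A where A: "A \<subseteq> Theta" "sets L = sets (restrict_space borel A)" using assms unfolding admissible_def by blast
  have "space L = space (restrict_space borel A)" using A(2) by (rule sets_eq_imp_space_eq)
  thus ?thesis using A(1) by (simp add: space_restrict_space)
qed

lemma adm_jm:
  assumes "admissible L"
  shows "(\<lambda>p. f (fst p) (snd p)) \<in> borel_measurable (L \<Otimes>\<^sub>M N)"
proof -
  obtain A where A: "A \<subseteq> Theta" "sets L = sets (restrict_space borel A)" using assms unfolding admissible_def by blast
  have "(\<lambda>p. p) \<in> restrict_space borel A \<Otimes>\<^sub>M N \<rightarrow>\<^sub>M restrict_space (borel \<Otimes>\<^sub>M N) (Theta \<times> space N)"
  proof (rule measurable_restrict_space2)
    show "(\<lambda>p. p) \<in> space (restrict_space borel A \<Otimes>\<^sub>M N) \<rightarrow> Theta \<times> space N"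
      using A(1) by (auto simp: space_pair_measure space_restrict_space)
    show "(\<lambda>p. p) \<in> restrict_space borel A \<Otimes>\<^sub>M N \<rightarrow>\<^sub>M borel \<Otimes>\<^sub>M N"
    proof (rule measurable_pair_measureI)
      show "(\<lambda>p. p) \<in> space (restrict_space borel A \<Otimes>\<^sub>M N) \<rightarrow> space borel \<times> space N"
        by (auto simp: space_pair_measure space_restrict_space)
      fix X :: "'t set" and Y assume XY: "X \<in> sets borel" "Y \<in> sets N"
      have "(\<lambda>p. p) -` (X \<times> Y) \<inter> space (restrict_space borel A \<Otimes>\<^sub>M N) = (X \<inter> A) \<times> Y"
        using sets.sets_into_space[OF XY(2)] by (auto simp: space_pair_measure space_restrict_space)
      moreover have "X \<inter> A \<in> sets (restrict_space borel A)" using XY(1) by (auto simp: sets_restrict_space)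
      ultimately show "(\<lambda>p. p) -` (X \<times> Y) \<inter> space (restrict_space borel A \<Otimes>\<^sub>M N) \<in> sets (restrict_space borel A \<Otimes>\<^sub>M N)"
        using XY(2) by auto
    qed
  qed
  from measurable_compose[OF this joint_meas]
  have "(\<lambda>p. f (fst p) (snd p)) \<in> borel_measurable (restrict_space borel A \<Otimes>\<^sub>M N)" by simp
  moreover have "sets (L \<Otimes>\<^sub>M N) = sets (restrict_space borel A \<Otimes>\<^sub>M N)"
    using A(2) by (intro sets_pair_measure_cong) auto
  ultimately show ?thesis using measurable_cong_sets by blast
qed


lemma adm_fin: "admissible L \<Longrightarrow> finite_measure L" unfolding admissible_def by blast

lemma adm_pair: assumes "admissible L" shows "pair_sigma_finite L N"
proof -
  interpret L: finite_measure L using adm_fin[OF assms] .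
  interpret N: sigma_finite_measure N by (rule sigma_fin)
  show ?thesis by unfold_locales
qed

lemma adm_sec: assumes "admissible L" "y \<in> space N" shows "(\<lambda>\<theta>. f \<theta> y) \<in> borel_measurable L"
proof -
  have "(\<lambda>\<theta>. (\<theta>, y)) \<in> L \<rightarrow>\<^sub>M L \<Otimes>\<^sub>M N" using assms(2) by simp
  from measurable_compose[OF this adm_jm[OF assms(1)]] show ?thesis by simp
qed

lemma prod_meas:
  assumes "admissible L" "\<phi> \<in> borel_measurable N"
  shows "(\<lambda>(\<theta>, y). \<phi> y * f \<theta> y) \<in> borel_measurable (L \<Otimes>\<^sub>M N)"
proof -
  have "(\<lambda>p. \<phi> (snd p)) \<in> borel_measurable (L \<Otimes>\<^sub>M N)" using assms(2) by measurable
  from borel_measurable_times[OF this adm_jm[OF assms(1)]] show ?thesis by (simp add: case_prod_beta)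
qed

lemma intg_meas:
  assumes "admissible L" "\<phi> \<in> borel_measurable N"
  shows "(\<lambda>\<theta>. \<integral>y. \<phi> y * f \<theta> y \<partial>N) \<in> borel_measurable L"
proof -
  interpret N: sigma_finite_measure N by (rule sigma_fin)
  show ?thesis using prod_meas[OF assms] by (rule N.borel_measurable_lebesgue_integral)
qed

lemma intg_int:
  assumes "\<theta> \<in> Theta" "\<phi> \<in> borel_measurable N" "\<And>y. y \<in> space N \<Longrightarrow> \<bar>\<phi> y\<bar> \<le> B"
  shows "integrable N (\<lambda>y. \<phi> y * f \<theta> y)"
proof (rule Bochner_Integration.integrable_bound[OF integrable_mult_right[OF fint(1)[OF assms(1)], of B]])
  show "(\<lambda>y. \<phi> y * f \<theta> y) \<in> borel_measurable N" using assms fmeas by measurable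
  show "AE x in N. norm (\<phi> x * f \<theta> x) \<le> norm (B * f \<theta> x)"
  proof (rule AE_I2)
    fix y assume y: "y \<in> space N"
    have "\<bar>\<phi> y\<bar> * f \<theta> y \<le> B * f \<theta> y" using assms(3)[OF y] dens_nonneg[OF assms(1) y] by (rule mult_right_mono)
    moreover have "0 \<le> B" using assms(3)[OF y] by linarith
    ultimately show "norm (\<phi> y * f \<theta> y) \<le> norm (B * f \<theta> y)" using dens_nonneg[OF assms(1) y]
      by (simp add: abs_mult)
  qed
qed

lemma intg_bound:
  assumes "\<theta> \<in> Theta" "\<phi> \<in> borel_measurable N" "\<And>y. y \<in> space N \<Longrightarrow> \<bar>\<phi> y\<bar> \<le> B"
  shows "\<bar>\<integral>y. \<phi> y * f \<theta> y \<partial>N\<bar> \<le> B"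
proof -
  have "\<bar>\<integral>y. \<phi> y * f \<theta> y \<partial>N\<bar> \<le> (\<integral>y. \<bar>\<phi> y * f \<theta> y\<bar> \<partial>N)" by (rule integral_abs_bound)
  also have "\<dots> \<le> (\<integral>y. B * f \<theta> y \<partial>N)"
  proof (rule Bochner_Integration.integral_mono)
    show "integrable N (\<lambda>y. \<bar>\<phi> y * f \<theta> y\<bar>)" using intg_int[OF assms] by simp
    show "integrable N (\<lambda>y. B * f \<theta> y)" using fint(1)[OF assms(1)] by simp
    show "\<bar>\<phi> y * f \<theta> y\<bar> \<le> B * f \<theta> y" if "y \<in> space N" for y
      using mult_right_mono[OF assms(3)[OF that] dens_nonneg[OF assms(1) that]] dens_nonneg[OF assms(1) that]
      by (simp add: abs_mult)
  qed
  also have "\<dots> = B" using fint(2)[OF assms(1)] by simp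
  finally show ?thesis .
qed

lemma prod_int:
  assumes L: "admissible L" and \<phi>: "\<phi> \<in> borel_measurable N" "\<And>y. y \<in> space N \<Longrightarrow> \<bar>\<phi> y\<bar> \<le> B" and B: "0 \<le> B"
  shows "integrable (L \<Otimes>\<^sub>M N) (\<lambda>(\<theta>, y). \<phi> y * f \<theta> y)"
proof (rule integrableI_bounded)
  interpret L: finite_measure L using adm_fin[OF L] .
  interpret N: sigma_finite_measure N by (rule sigma_fin)
  show "(\<lambda>(\<theta>, y). \<phi> y * f \<theta> y) \<in> borel_measurable (L \<Otimes>\<^sub>M N)" by (rule prod_meas[OF L \<phi>(1)])
  have jm: "(\<lambda>p. f (fst p) (snd p)) \<in> borel_measurable (L \<Otimes>\<^sub>M N)" by (rule adm_jm[OF L])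
  have "(\<integral>\<^sup>+ p. ennreal (norm ((\<lambda>(\<theta>, y). \<phi> y * f \<theta> y) p)) \<partial>(L \<Otimes>\<^sub>M N))
      \<le> (\<integral>\<^sup>+ p. ennreal (B * f (fst p) (snd p)) \<partial>(L \<Otimes>\<^sub>M N))"
  proof (rule nn_integral_mono)
    fix p assume p: "p \<in> space (L \<Otimes>\<^sub>M N)"
    hence th: "fst p \<in> Theta" and y: "snd p \<in> space N" using adm_space[OF L] by (auto simp: space_pair_measure)
    have "\<bar>\<phi> (snd p)\<bar> * f (fst p) (snd p) \<le> B * f (fst p) (snd p)"
      using \<phi>(2)[OF y] dens_nonneg[OF th y] by (rule mult_right_mono)
    thus "ennreal (norm ((\<lambda>(\<theta>, y). \<phi> y * f \<theta> y) p)) \<le> ennreal (B * f (fst p) (snd p))"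
      using dens_nonneg[OF th y] by (auto simp: abs_mult case_prod_beta intro: ennreal_leI)
  qed
  also have "\<dots> = (\<integral>\<^sup>+ \<theta>. \<integral>\<^sup>+ y. ennreal (B * f \<theta> y) \<partial>N \<partial>L)"
    using jm by (subst N.nn_integral_fst[symmetric]) (auto simp: B)
  also have "\<dots> = (\<integral>\<^sup>+ \<theta>. ennreal B \<partial>L)"
  proof (rule nn_integral_cong)
    fix \<theta> assume "\<theta> \<in> space L"
    hence th: "\<theta> \<in> Theta" using adm_space[OF L] by auto
    have "(\<integral>\<^sup>+ y. ennreal (B * f \<theta> y) \<partial>N) = (\<integral>\<^sup>+ y. ennreal B * ennreal (f \<theta> y) \<partial>N)"
      using B dens_nonneg[OF th] by (intro nn_integral_cong) (simp add: ennreal_mult)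
    also have "\<dots> = ennreal B * (\<integral>\<^sup>+ y. ennreal (f \<theta> y) \<partial>N)" using fmeas[OF th] by (intro nn_integral_cmult) auto
    also have "\<dots> = ennreal B" using dens_one[OF th] by simp
    finally show "(\<integral>\<^sup>+ y. ennreal (B * f \<theta> y) \<partial>N) = ennreal B" .
  qed
  also have "\<dots> = ennreal B * emeasure L (space L)" by simp
  also have "\<dots> < \<infinity>"
  proof -
    have "emeasure L (space L) < \<top>" using L.emeasure_finite[of "space L"] by (simp add: less_top[symmetric])
    thus ?thesis by (simp add: ennreal_mult_less_top)
  qed
  finally show "(\<integral>\<^sup>+ p. ennreal (norm ((\<lambda>(\<theta>, y). \<phi> y * f \<theta> y) p)) \<partial>(L \<Otimes>\<^sub>M N)) < \<infinity>" .
qed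

lemma fubini:
  assumes L: "admissible L" and \<phi>: "\<phi> \<in> borel_measurable N" "\<And>y. y \<in> space N \<Longrightarrow> \<bar>\<phi> y\<bar> \<le> B" and B: "0 \<le> B"
  shows "(\<integral>\<theta>. (\<integral>y. \<phi> y * f \<theta> y \<partial>N) \<partial>L) = (\<integral>y. \<phi> y * mix L f y \<partial>N)"
proof -
  interpret P: pair_sigma_finite L N by (rule adm_pair[OF L])
  have "(\<integral>y. (\<integral>\<theta>. \<phi> y * f \<theta> y \<partial>L) \<partial>N) = (\<integral>\<theta>. (\<integral>y. \<phi> y * f \<theta> y \<partial>N) \<partial>L)"
    using P.Fubini_integral[OF prod_int[OF L \<phi> B]] by simp
  moreover have "(\<integral>y. \<phi> y * mix L f y \<partial>N) = (\<integral>y. (\<integral>\<theta>. \<phi> y * f \<theta> y \<partial>L) \<partial>N)"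
    unfolding mix_def by simp
  ultimately show ?thesis by simp
qed

lemma mix_meas: assumes L: "admissible L" shows "mix L f \<in> borel_measurable N"
proof -
  interpret L: finite_measure L using adm_fin[OF L] .
  have "(\<lambda>p. f (fst p) (snd p)) \<circ> (\<lambda>(x, y). (y, x)) \<in> borel_measurable (N \<Otimes>\<^sub>M L)"
    using measurable_pair_swap' adm_jm[OF L] by (rule measurable_comp)
  hence "(\<lambda>(y, \<theta>). f \<theta> y) \<in> borel_measurable (N \<Otimes>\<^sub>M L)" by (simp add: o_def case_prod_beta)
  hence "(\<lambda>y. \<integral>\<theta>. f \<theta> y \<partial>L) \<in> borel_measurable N" by (rule L.borel_measurable_lebesgue_integral)
  thus ?thesis unfolding mix_def .
qed

lemma mix_nonneg: assumes L: "admissible L" and y: "y \<in> space N" shows "0 \<le> mix L f y"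
  unfolding mix_def using adm_space[OF L] dens_nonneg y by (intro Bochner_Integration.integral_nonneg) auto

lemma mix_int: assumes L: "admissible L" shows "integrable N (mix L f)"
proof -
  interpret P: pair_sigma_finite L N by (rule adm_pair[OF L])
  have "integrable N (\<lambda>y. \<integral>\<theta>. 1 * f \<theta> y \<partial>L)"
    by (rule P.integrable_snd[OF prod_int[OF L, of "\<lambda>_. 1" 1]]) auto
  thus ?thesis unfolding mix_def by simp
qed

lemma mix_total: assumes L: "admissible L" shows "(\<integral>y. mix L f y \<partial>N) = measure L (space L)"
proof -
  have "(\<integral>y. 1 * mix L f y \<partial>N) = (\<integral>\<theta>. (\<integral>y. 1 * f \<theta> y \<partial>N) \<partial>L)"
    by (rule fubini[OF L, of "\<lambda>_. 1" 1, symmetric]) auto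
  also have "\<dots> = (\<integral>\<theta>. 1 \<partial>L)"
    using adm_space[OF L] fint(2) by (intro Bochner_Integration.integral_cong) auto
  finally show ?thesis by simp
qed

end

lemma integral_scale:
  fixes g :: "'a \<Rightarrow> real" assumes r: "0 \<le> r"
  shows "(\<integral>x. g x \<partial>scale_measure r M) = r * (\<integral>x. g x \<partial>M)"
proof -
  have eq: "scale_measure r M = density M (\<lambda>_. ennreal r)"
    by (rule measure_eqI) (auto simp: emeasure_density nn_integral_cmult_indicator)
  show ?thesis
  proof (cases "g \<in> borel_measurable M")
    case True
    have "(\<integral>x. g x \<partial>density M (\<lambda>_. ennreal r)) = (\<integral>x. r *\<^sub>R g x \<partial>M)"
      using True r by (intro integral_density) auto
    thus ?thesis using eq by simp
  next
    case False
    hence "\<not> integrable M g" by auto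
    moreover have "\<not> integrable (scale_measure r M) g"
      using False measurable_cong_sets[OF sets_scale_measure refl, of r M borel] by auto
    ultimately show ?thesis by (simp add: not_integrable_integral_eq)
  qed
qed

locale main = dens N f Theta
  for N :: "'y measure" and f :: "'t::topological_space \<Rightarrow> 'y \<Rightarrow> real" and Theta :: "'t set" +
  fixes Theta0 Theta1 :: "'t set" and \<alpha> :: real and \<phi>ah :: "'y \<Rightarrow> real" and \<Omega> :: "'t measure"
  assumes sub0: "Theta0 \<subseteq> Theta" and sub1: "Theta1 \<subseteq> Theta"
    and alpha: "0 < \<alpha>" "\<alpha> < 1"
    and ah: "\<phi>ah \<in> Phi_alpha N f Theta0 \<alpha>"
    and Omega: "\<Omega> \<in> prob_distributions_on Theta1"
begin

abbreviation "g \<equiv> mix \<Omega> f"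
definition J where "J \<phi> = objP N \<phi>ah g \<phi>"
definition cc where "cc \<theta> \<phi> = (\<integral>y. \<phi> y * f \<theta> y \<partial>N) - \<alpha>"
abbreviation "lag \<phi> L \<equiv> lagr N f \<alpha> \<phi>ah g \<phi> L"
abbreviation "dual L \<equiv> dualf N f \<alpha> \<phi>ah g L"

lemma Omega_adm: "admissible \<Omega>"
  using Omega sub1 unfolding prob_distributions_on_def admissible_def prob_space_def by blast

lemma Omega_prob: "prob_space \<Omega>" using Omega unfolding prob_distributions_on_def by blast

lemma M0_adm: "L \<in> finite_measures_on Theta0 \<Longrightarrow> admissible L"
  using sub0 unfolding finite_measures_on_def admissible_def by blast

lemma ah_Phi: "\<phi>ah \<in> Phi N" using ah unfolding Phi_alpha_def by blast

lemma Phi_bd: "\<phi> \<in> Phi N \<Longrightarrow> y \<in> space N \<Longrightarrow> \<bar>\<phi> y\<bar> \<le> 1"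
  unfolding Phi_def by auto

lemma Phi_meas[measurable_dest]: "\<phi> \<in> Phi N \<Longrightarrow> \<phi> \<in> borel_measurable N"
  unfolding Phi_def by auto

lemma Phi_diff_bd: "\<phi> \<in> Phi N \<Longrightarrow> \<psi> \<in> Phi N \<Longrightarrow> y \<in> space N \<Longrightarrow> \<bar>\<phi> y - \<psi> y\<bar> \<le> 1"
proof -
  assume a: "\<phi> \<in> Phi N" "\<psi> \<in> Phi N" "y \<in> space N"
  have "0 \<le> \<phi> y" "\<phi> y \<le> 1" "0 \<le> \<psi> y" "\<psi> y \<le> 1" using a unfolding Phi_def by auto
  thus ?thesis by linarith
qed

lemma mixint:
  assumes L: "admissible L" and \<phi>: "\<phi> \<in> borel_measurable N" "\<And>y. y \<in> space N \<Longrightarrow> \<bar>\<phi> y\<bar> \<le> B"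
  shows "integrable N (\<lambda>y. \<phi> y * mix L f y)"
proof (rule Bochner_Integration.integrable_bound[OF integrable_mult_right[OF mix_int[OF L], of B]])
  show "(\<lambda>y. \<phi> y * mix L f y) \<in> borel_measurable N" using \<phi>(1) mix_meas[OF L] by measurable
  show "AE x in N. norm (\<phi> x * mix L f x) \<le> norm (B * mix L f x)"
  proof (rule AE_I2)
    fix y assume y: "y \<in> space N"
    have "\<bar>\<phi> y\<bar> * mix L f y \<le> B * mix L f y" using \<phi>(2)[OF y] mix_nonneg[OF L y] by (rule mult_right_mono)
    moreover have "0 \<le> B" using \<phi>(2)[OF y] by linarith
    ultimately show "norm (\<phi> y * mix L f y) \<le> norm (B * mix L f y)" using mix_nonneg[OF L y]
      by (simp add: abs_mult)
  qed
qed

lemma mixint_bd: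
  assumes L: "admissible L" and \<phi>: "\<phi> \<in> borel_measurable N" "\<And>y. y \<in> space N \<Longrightarrow> \<bar>\<phi> y\<bar> \<le> B"
  shows "\<bar>\<integral>y. \<phi> y * mix L f y \<partial>N\<bar> \<le> B * measure L (space L)"
proof -
  have "\<bar>\<integral>y. \<phi> y * mix L f y \<partial>N\<bar> \<le> (\<integral>y. \<bar>\<phi> y * mix L f y\<bar> \<partial>N)" by (rule integral_abs_bound)
  also have "\<dots> \<le> (\<integral>y. B * mix L f y \<partial>N)"
  proof (rule Bochner_Integration.integral_mono)
    show "integrable N (\<lambda>y. \<bar>\<phi> y * mix L f y\<bar>)" using mixint[OF assms] by simp
    show "integrable N (\<lambda>y. B * mix L f y)" using mix_int[OF L] by simp
    show "\<bar>\<phi> y * mix L f y\<bar> \<le> B * mix L f y" if "y \<in> space N" for y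
      using mult_right_mono[OF \<phi>(2)[OF that] mix_nonneg[OF L that]] mix_nonneg[OF L that]
      by (simp add: abs_mult)
  qed
  also have "\<dots> = B * measure L (space L)" using mix_total[OF L] by simp
  finally show ?thesis .
qed

lemma g_total: "(\<integral>y. g y \<partial>N) = 1"
  using mix_total[OF Omega_adm] prob_space.prob_space[OF Omega_prob] by simp

lemma J_eq: assumes "\<phi> \<in> Phi N" shows "J \<phi> = (\<integral>y. \<phi> y * g y \<partial>N) - (\<integral>y. \<phi>ah y * g y \<partial>N)"
proof -
  have "J \<phi> = (\<integral>y. \<phi> y * g y - \<phi>ah y * g y \<partial>N)" unfolding J_def objP_def by (simp add: left_diff_distrib)
  also have "\<dots> = (\<integral>y. \<phi> y * g y \<partial>N) - (\<integral>y. \<phi>ah y * g y \<partial>N)"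
    using mixint[OF Omega_adm, of \<phi> 1] mixint[OF Omega_adm, of \<phi>ah 1] assms ah_Phi Phi_bd
    by (intro Bochner_Integration.integral_diff) auto
  finally show ?thesis .
qed

lemma J_bd: assumes "\<phi> \<in> Phi N" shows "\<bar>J \<phi>\<bar> \<le> 1"
proof -
  have "J \<phi> = (\<integral>y. (\<phi> y - \<phi>ah y) * g y \<partial>N)" unfolding J_def objP_def ..
  also have "\<bar>\<dots>\<bar> \<le> 1 * measure \<Omega> (space \<Omega>)"
    using assms ah_Phi Phi_diff_bd by (intro mixint_bd[OF Omega_adm]) auto
  finally show ?thesis using prob_space.prob_space[OF Omega_prob] by simp
qed

lemma cc_meas: assumes "admissible L" "\<phi> \<in> Phi N" shows "(\<lambda>\<theta>. cc \<theta> \<phi>) \<in> borel_measurable L"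
  unfolding cc_def using intg_meas[OF assms(1) Phi_meas[OF assms(2)]] by measurable

lemma cc_bd: assumes "\<theta> \<in> Theta" "\<phi> \<in> Phi N" shows "\<bar>cc \<theta> \<phi> + \<alpha>\<bar> \<le> 1"
  unfolding cc_def using intg_bound[OF assms(1) Phi_meas[OF assms(2)] Phi_bd[OF assms(2)]] by simp

lemma lagr_cc: "lag \<phi> L = J \<phi> - (\<integral>\<theta>. cc \<theta> \<phi> \<partial>L)"
  unfolding lagr_def J_def cc_def ..

lemma lagr_eq:
  assumes L: "admissible L" and \<phi>: "\<phi> \<in> Phi N"
  shows "lag \<phi> L = J \<phi> - (\<integral>y. \<phi> y * mix L f y \<partial>N) + \<alpha> * measure L (space L)"
proof -
  interpret L: finite_measure L using adm_fin[OF L] .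
  have int: "integrable L (\<lambda>\<theta>. \<integral>y. \<phi> y * f \<theta> y \<partial>N)"
  proof (rule L.bdd_integrable[where B=1])
    show "(\<lambda>\<theta>. \<integral>y. \<phi> y * f \<theta> y \<partial>N) \<in> borel_measurable L" using intg_meas[OF L Phi_meas[OF \<phi>]] .
    show "\<bar>\<integral>y. \<phi> y * f \<theta> y \<partial>N\<bar> \<le> 1" if "\<theta> \<in> space L" for \<theta>
      using intg_bound[OF _ Phi_meas[OF \<phi>] Phi_bd[OF \<phi>]] adm_space[OF L] that by auto
  qed
  have "(\<integral>\<theta>. cc \<theta> \<phi> \<partial>L) = (\<integral>\<theta>. (\<integral>y. \<phi> y * f \<theta> y \<partial>N) \<partial>L) - (\<integral>\<theta>. \<alpha> \<partial>L)"
    unfolding cc_def using int by (intro Bochner_Integration.integral_diff) auto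
  also have "\<dots> = (\<integral>y. \<phi> y * mix L f y \<partial>N) - \<alpha> * measure L (space L)"
    using fubini[OF L Phi_meas[OF \<phi>] Phi_bd[OF \<phi>]] by simp
  finally show ?thesis unfolding lagr_cc by simp
qed

lemma lagr_bd:
  assumes L: "admissible L" and \<phi>: "\<phi> \<in> Phi N"
  shows "\<bar>lag \<phi> L\<bar> \<le> 1 + (1 + \<alpha>) * measure L (space L)"
proof -
  have a: "\<bar>\<integral>y. \<phi> y * mix L f y \<partial>N\<bar> \<le> 1 * measure L (space L)"
    by (rule mixint_bd[OF L Phi_meas[OF \<phi>] Phi_bd[OF \<phi>]])
  have b: "0 \<le> measure L (space L)" by simp
  have c: "0 \<le> \<alpha> * measure L (space L)" using alpha by simp
  have d: "(1 + \<alpha>) * measure L (space L) = measure L (space L) + \<alpha> * measure L (space L)" by (simp add: algebra_simps)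
  show ?thesis using lagr_eq[OF assms] J_bd[OF \<phi>] a b c d unfolding abs_le_iff by linarith
qed

lemma zero_Phi: "(\<lambda>_. 0) \<in> Phi N" unfolding Phi_def by simp

lemma bdd_lag: assumes L: "admissible L" shows "bdd_above ((\<lambda>\<phi>. lag \<phi> L) ` Phi N)"
  using lagr_bd[OF L] by (intro bdd_aboveI[of _ "1 + (1 + \<alpha>) * measure L (space L)"]) (auto simp: abs_le_iff)

lemma dual_ge: "admissible L \<Longrightarrow> \<phi> \<in> Phi N \<Longrightarrow> lag \<phi> L \<le> dual L"
  unfolding dualf_def by (rule cSUP_upper[OF _ bdd_lag])

lemma dual_le: "(\<And>\<phi>. \<phi> \<in> Phi N \<Longrightarrow> lag \<phi> L \<le> C) \<Longrightarrow> dual L \<le> C"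
  unfolding dualf_def using zero_Phi by (intro cSUP_least) auto

end

context main
begin

lemma intD:
  assumes L: "admissible L" and \<psi>: "\<psi> \<in> borel_measurable N" "\<And>y. y \<in> space N \<Longrightarrow> \<bar>\<psi> y\<bar> \<le> B"
  shows "integrable N (\<lambda>y. \<psi> y * (g y - mix L f y))"
proof -
  have "integrable N (\<lambda>y. \<psi> y * g y - \<psi> y * mix L f y)"
    using mixint[OF Omega_adm \<psi>] mixint[OF L \<psi>] by (rule Bochner_Integration.integrable_diff)
  thus ?thesis by (simp add: right_diff_distrib)
qed

lemma lag_D:
  assumes L: "admissible L" and \<psi>: "\<psi> \<in> Phi N"
  shows "lag \<psi> L = (\<integral>y. \<psi> y * (g y - mix L f y) \<partial>N) - (\<integral>y. \<phi>ah y * g y \<partial>N) + \<alpha> * measure L (space L)"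
proof -
  have "(\<integral>y. \<psi> y * (g y - mix L f y) \<partial>N) = (\<integral>y. \<psi> y * g y - \<psi> y * mix L f y \<partial>N)"
    by (simp add: right_diff_distrib)
  also have "\<dots> = (\<integral>y. \<psi> y * g y \<partial>N) - (\<integral>y. \<psi> y * mix L f y \<partial>N)"
    using mixint[OF Omega_adm Phi_meas[OF \<psi>] Phi_bd[OF \<psi>]] mixint[OF L Phi_meas[OF \<psi>] Phi_bd[OF \<psi>]]
    by (rule Bochner_Integration.integral_diff)
  finally show ?thesis using lagr_eq[OF L \<psi>] J_eq[OF \<psi>] by simp
qed

lemma part2:
  assumes L: "admissible L"
  defines "ps \<equiv> (\<lambda>y. if g y > mix L f y then 1 else (0::real))"
  shows "ps \<in> Phi N" and "\<And>\<psi>. \<psi> \<in> Phi N \<Longrightarrow> lag \<psi> L \<le> lag ps L"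
    and "\<And>\<phi>. \<phi> \<in> Phi N \<Longrightarrow> (\<forall>\<psi>\<in>Phi N. lag \<psi> L \<le> lag \<phi> L) \<Longrightarrow>
        AE y in N. (g y > mix L f y \<longrightarrow> \<phi> y = 1) \<and> (g y < mix L f y \<longrightarrow> \<phi> y = 0)"
proof -
  note [measurable] = mix_meas[OF L] mix_meas[OF Omega_adm]
  show psP: "ps \<in> Phi N" unfolding Phi_def ps_def by auto
  have pw: "\<psi> y * (g y - mix L f y) \<le> ps y * (g y - mix L f y)" if "\<psi> \<in> Phi N" "y \<in> space N" for \<psi> y
  proof -
    have "0 \<le> \<psi> y" "\<psi> y \<le> 1" using that unfolding Phi_def by auto
    thus ?thesis unfolding ps_def
      by (cases "g y > mix L f y") (auto simp: mult_le_cancel_right1 mult_nonneg_nonpos)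
  qed
  have intP: "integrable N (\<lambda>y. \<psi> y * (g y - mix L f y))" if "\<psi> \<in> Phi N" for \<psi>
    using intD[OF L Phi_meas[OF that] Phi_bd[OF that]] .
  show le: "lag \<psi> L \<le> lag ps L" if "\<psi> \<in> Phi N" for \<psi>
  proof -
    have "(\<integral>y. \<psi> y * (g y - mix L f y) \<partial>N) \<le> (\<integral>y. ps y * (g y - mix L f y) \<partial>N)"
      using intP[OF that] intP[OF psP] pw[OF that] by (intro Bochner_Integration.integral_mono) auto
    thus ?thesis using lag_D[OF L that] lag_D[OF L psP] by simp
  qed
  fix \<phi> assume \<phi>: "\<phi> \<in> Phi N" and mx: "\<forall>\<psi>\<in>Phi N. lag \<psi> L \<le> lag \<phi> L"
  have "lag ps L \<le> lag \<phi> L" using mx psP by blast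
  hence "(\<integral>y. ps y * (g y - mix L f y) \<partial>N) \<le> (\<integral>y. \<phi> y * (g y - mix L f y) \<partial>N)"
    using lag_D[OF L \<phi>] lag_D[OF L psP] by simp
  hence "(\<integral>y. ps y * (g y - mix L f y) - \<phi> y * (g y - mix L f y) \<partial>N) \<le> 0"
    using intP[OF psP] intP[OF \<phi>] by simp
  moreover have i: "integrable N (\<lambda>y. ps y * (g y - mix L f y) - \<phi> y * (g y - mix L f y))"
    using intP[OF psP] intP[OF \<phi>] by simp
  moreover have nn: "AE y in N. 0 \<le> ps y * (g y - mix L f y) - \<phi> y * (g y - mix L f y)"
    using pw[OF \<phi>] by (intro AE_I2) simp
  ultimately have "(\<integral>y. ps y * (g y - mix L f y) - \<phi> y * (g y - mix L f y) \<partial>N) = 0"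
    using integral_nonneg_AE[OF nn] by linarith
  hence "AE y in N. ps y * (g y - mix L f y) - \<phi> y * (g y - mix L f y) = 0"
    using integral_nonneg_eq_0_iff_AE[OF i nn] by simp
  thus "AE y in N. (g y > mix L f y \<longrightarrow> \<phi> y = 1) \<and> (g y < mix L f y \<longrightarrow> \<phi> y = 0)"
  proof eventually_elim
    case (elim y)
    hence "(ps y - \<phi> y) * (g y - mix L f y) = 0" by (simp add: left_diff_distrib)
    thus ?case unfolding ps_def by auto
  qed
qed

end

context main
begin

lemma exists_mu: "\<exists>\<mu>. finite_measure \<mu> \<and> Phi \<mu> = Phi N \<and> (\<forall>P. (AE y in \<mu>. P y) \<longrightarrow> (AE y in N. P y))"
proof -
  interpret N: sigma_finite_measure N by (rule sigma_fin)
  obtain w :: "'y \<Rightarrow> real" where w: "w \<in> borel_measurable N" "\<And>x. w x > 0" "\<And>x. w x \<le> 1" "integrable N w"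
    by (rule N.obtain_positive_integrable_function) blast
  define \<mu> where "\<mu> = density N (\<lambda>y. ennreal (w y))"
  have "emeasure \<mu> (space \<mu>) = (\<integral>\<^sup>+ y. ennreal (w y) \<partial>N)"
    unfolding \<mu>_def using w(1) by (simp add: emeasure_density)
  moreover have "(\<integral>\<^sup>+ y. ennreal (w y) \<partial>N) \<noteq> \<infinity>" using integrableD(2)[OF w(4)] .
  ultimately have fm: "finite_measure \<mu>" by (intro finite_measureI) simp
  have "Phi \<mu> = Phi N" unfolding Phi_def \<mu>_def
    using measurable_cong_sets[OF sets_density refl, of N "\<lambda>y. ennreal (w y)" borel] by simp
  moreover have "(AE y in \<mu>. P y) \<longrightarrow> (AE y in N. P y)" for P
    unfolding \<mu>_def using w(1,2) by (simp add: AE_density)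
  ultimately show ?thesis using fm by blast
qed

lemma closure_cc:
  assumes s: "\<And>n. s n \<in> Phi N" and \<phi>: "\<phi> \<in> Phi N" and lim: "AE y in N. (\<lambda>n. s n y) \<longlonglongrightarrow> \<phi> y"
    and th: "\<theta> \<in> Theta"
  shows "(\<lambda>n. cc \<theta> (s n)) \<longlonglongrightarrow> cc \<theta> \<phi>"
proof -
  have "(\<lambda>n. \<integral>y. s n y * f \<theta> y \<partial>N) \<longlonglongrightarrow> (\<integral>y. \<phi> y * f \<theta> y \<partial>N)"
  proof (rule integral_dominated_convergence[where w="f \<theta>"])
    show "(\<lambda>y. \<phi> y * f \<theta> y) \<in> borel_measurable N" using \<phi> fmeas[OF th] by measurable
    show "(\<lambda>y. s n y * f \<theta> y) \<in> borel_measurable N" for n using s fmeas[OF th] by measurable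
    show "integrable N (f \<theta>)" by (rule fint(1)[OF th])
    show "AE y in N. (\<lambda>n. s n y * f \<theta> y) \<longlonglongrightarrow> \<phi> y * f \<theta> y"
      using lim by eventually_elim (rule tendsto_mult_right)
    show "AE y in N. norm (s n y * f \<theta> y) \<le> f \<theta> y" for n
    proof (rule AE_I2)
      fix y assume y: "y \<in> space N"
      have "\<bar>s n y\<bar> * f \<theta> y \<le> 1 * f \<theta> y" using Phi_bd[OF s y] dens_nonneg[OF th y] by (rule mult_right_mono)
      thus "norm (s n y * f \<theta> y) \<le> f \<theta> y" using dens_nonneg[OF th y] by (simp add: abs_mult)
    qed
  qed
  thus ?thesis unfolding cc_def by (intro tendsto_diff) auto
qed

lemma closure_J:
  assumes s: "\<And>n. s n \<in> Phi N" and \<phi>: "\<phi> \<in> Phi N" and lim: "AE y in N. (\<lambda>n. s n y) \<longlonglongrightarrow> \<phi> y"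
  shows "(\<lambda>n. J (s n)) \<longlonglongrightarrow> J \<phi>"
  unfolding J_def objP_def
proof (rule integral_dominated_convergence[where w=g])
  note [measurable] = mix_meas[OF Omega_adm] Phi_meas[OF ah_Phi]
  show "(\<lambda>y. (\<phi> y - \<phi>ah y) * g y) \<in> borel_measurable N" using \<phi> by measurable
  show "(\<lambda>y. (s n y - \<phi>ah y) * g y) \<in> borel_measurable N" for n using s by measurable
  show "integrable N g" by (rule mix_int[OF Omega_adm])
  show "AE y in N. (\<lambda>n. (s n y - \<phi>ah y) * g y) \<longlonglongrightarrow> (\<phi> y - \<phi>ah y) * g y"
    using lim by eventually_elim (intro tendsto_mult_right tendsto_diff, auto)
  show "AE y in N. norm ((s n y - \<phi>ah y) * g y) \<le> g y" for n
  proof (rule AE_I2)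
    fix y assume y: "y \<in> space N"
    have "\<bar>s n y - \<phi>ah y\<bar> * g y \<le> 1 * g y"
      using Phi_diff_bd[OF s ah_Phi y] mix_nonneg[OF Omega_adm y] by (rule mult_right_mono)
    thus "norm ((s n y - \<phi>ah y) * g y) \<le> g y" using mix_nonneg[OF Omega_adm y] by (simp add: abs_mult)
  qed
qed

lemma aff_cc: assumes th: "\<theta> \<in> Theta" shows "aff (Phi N) (cc \<theta>)"
  unfolding aff_def
proof (intro ballI allI impI)
  fix \<phi> \<psi> t assume a: "\<phi> \<in> Phi N" "\<psi> \<in> Phi N" "0 \<le> (t::real)" "t \<le> 1"
  have i1: "integrable N (\<lambda>y. \<phi> y * f \<theta> y)" "integrable N (\<lambda>y. \<psi> y * f \<theta> y)"
    using intg_int[OF th Phi_meas[OF a(1)] Phi_bd[OF a(1)]] intg_int[OF th Phi_meas[OF a(2)] Phi_bd[OF a(2)]] by auto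
  have "(\<integral>y. comb t \<phi> \<psi> y * f \<theta> y \<partial>N) = (\<integral>y. t * (\<phi> y * f \<theta> y) + (1 - t) * (\<psi> y * f \<theta> y) \<partial>N)"
    unfolding comb_def by (simp add: algebra_simps)
  also have "\<dots> = t * (\<integral>y. \<phi> y * f \<theta> y \<partial>N) + (1 - t) * (\<integral>y. \<psi> y * f \<theta> y \<partial>N)"
    using i1 by simp
  finally show "cc \<theta> (comb t \<phi> \<psi>) = t * cc \<theta> \<phi> + (1 - t) * cc \<theta> \<psi>"
    unfolding cc_def by (simp add: algebra_simps)
qed

lemma aff_J: "aff (Phi N) J"
  unfolding aff_def
proof (intro ballI allI impI)
  fix \<phi> \<psi> t assume a: "\<phi> \<in> Phi N" "\<psi> \<in> Phi N" "0 \<le> (t::real)" "t \<le> 1"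
  have i1: "integrable N (\<lambda>y. \<phi> y * g y)" "integrable N (\<lambda>y. \<psi> y * g y)"
    using mixint[OF Omega_adm Phi_meas[OF a(1)] Phi_bd[OF a(1)]] mixint[OF Omega_adm Phi_meas[OF a(2)] Phi_bd[OF a(2)]] by auto
  have c: "comb t \<phi> \<psi> \<in> Phi N" using Phi_comb a by blast
  have "(\<integral>y. comb t \<phi> \<psi> y * g y \<partial>N) = (\<integral>y. t * (\<phi> y * g y) + (1 - t) * (\<psi> y * g y) \<partial>N)"
    unfolding comb_def by (simp add: algebra_simps)
  also have "\<dots> = t * (\<integral>y. \<phi> y * g y \<partial>N) + (1 - t) * (\<integral>y. \<psi> y * g y \<partial>N)"
    using i1 by simp
  finally show "J (comb t \<phi> \<psi>) = t * J \<phi> + (1 - t) * J \<psi>"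
    unfolding J_eq[OF c] J_eq[OF a(1)] J_eq[OF a(2)] by (simp add: algebra_simps)
qed

definition V where "V = (SUP \<phi>\<in>Phi_alpha N f Theta0 \<alpha>. J \<phi>)"

lemma Phia_ne: "Phi_alpha N f Theta0 \<alpha> \<noteq> {}" using ah by blast

lemma bdd_J: "bdd_above (J ` A)" if "A \<subseteq> Phi N" for A
  using J_bd that by (intro bdd_aboveI[of _ 1]) (auto simp: abs_le_iff)

lemma Phia_sub: "Phi_alpha N f Theta0 \<alpha> \<subseteq> Phi N" unfolding Phi_alpha_def by blast

lemma J_le_V: "\<phi> \<in> Phi_alpha N f Theta0 \<alpha> \<Longrightarrow> J \<phi> \<le> V"
  unfolding V_def by (rule cSUP_upper[OF _ bdd_J[OF Phia_sub]])

lemma Phia_cc: "\<phi> \<in> Phi_alpha N f Theta0 \<alpha> \<longleftrightarrow> \<phi> \<in> Phi N \<and> (\<forall>\<theta>\<in>Theta0. cc \<theta> \<phi> \<le> 0)"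
  unfolding Phi_alpha_def cc_def by auto

lemma part1: "\<exists>\<phi>\<in>Phi_alpha N f Theta0 \<alpha>. \<forall>\<psi>\<in>Phi_alpha N f Theta0 \<alpha>. J \<psi> \<le> J \<phi>"
proof -
  obtain \<mu> where \<mu>: "finite_measure \<mu>" "Phi \<mu> = Phi N" "\<And>P. (AE y in \<mu>. P y) \<Longrightarrow> (AE y in N. P y)"
    using exists_mu by blast
  interpret mu: finite_measure \<mu> by (rule \<mu>(1))
  define K where "K n = {\<phi>\<in>Phi_alpha N f Theta0 \<alpha>. V - 1 / (real n + 1) \<le> J \<phi>}" for n :: nat
  have "\<exists>\<phi>. \<forall>n. \<phi> \<in> K n"
  proof (rule mu.directed_inter)
    show "K n \<subseteq> Phi \<mu>" for n unfolding K_def \<mu>(2) using Phia_sub by blast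
    show "K n \<noteq> {}" for n
    proof -
      have "V - 1 / (real n + 1) < Sup (J ` Phi_alpha N f Theta0 \<alpha>)" unfolding V_def by simp
      from less_cSupD[OF _ this] Phia_ne obtain \<phi> where "\<phi> \<in> Phi_alpha N f Theta0 \<alpha>" "V - 1 / (real n + 1) < J \<phi>"
        by blast
      thus ?thesis unfolding K_def by (auto intro: less_imp_le)
    qed
    show "cvx (K n)" for n unfolding cvx_def
    proof (intro ballI allI impI)
      fix \<phi> \<psi> t assume a: "\<phi> \<in> K n" "\<psi> \<in> K n" "0 \<le> (t::real)" "t \<le> 1"
      hence P: "\<phi> \<in> Phi N" "\<psi> \<in> Phi N" unfolding K_def Phi_alpha_def by auto
      have c: "comb t \<phi> \<psi> \<in> Phi N" using Phi_comb P a by blast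
      have tx: "t * x + (1 - t) * x = x" for x :: real by (simp add: algebra_simps)
      have "cc \<theta> (comb t \<phi> \<psi>) \<le> 0" if "\<theta> \<in> Theta0" for \<theta>
      proof -
        have "cc \<theta> \<phi> \<le> 0" "cc \<theta> \<psi> \<le> 0" using a that unfolding K_def Phia_cc by auto
        moreover have "cc \<theta> (comb t \<phi> \<psi>) = t * cc \<theta> \<phi> + (1 - t) * cc \<theta> \<psi>"
          using aff_cc[of \<theta>] that sub0 P a unfolding aff_def by blast
        ultimately show ?thesis using a by (simp add: add_nonpos_nonpos mult_nonneg_nonpos)
      qed
      moreover have "V - 1 / (real n + 1) \<le> J (comb t \<phi> \<psi>)"
      proof -
        have "J (comb t \<phi> \<psi>) = t * J \<phi> + (1 - t) * J \<psi>" using aff_J P a unfolding aff_def by blast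
        moreover have "V - 1 / (real n + 1) \<le> J \<phi>" "V - 1 / (real n + 1) \<le> J \<psi>" using a unfolding K_def by auto
        moreover have "t * (V - 1 / (real n + 1)) \<le> t * J \<phi>" using a calculation(2) by (intro mult_left_mono) auto
        moreover have "(1 - t) * (V - 1 / (real n + 1)) \<le> (1 - t) * J \<psi>" using a calculation(3) by (intro mult_left_mono) auto
        moreover have "t * (V - 1 / (real n + 1)) + (1 - t) * (V - 1 / (real n + 1)) = V - 1 / (real n + 1)"
          using tx[of "V - 1 / (real n + 1)"] .
        ultimately show ?thesis by linarith
      qed
      ultimately show "comb t \<phi> \<psi> \<in> K n" using c unfolding K_def Phia_cc by auto
    qed
    show "\<phi> \<in> K n" if s: "\<And>k. s k \<in> K n" and \<phi>: "\<phi> \<in> Phi \<mu>" and lim: "AE y in \<mu>. (\<lambda>k. s k y) \<longlonglongrightarrow> \<phi> y" for n s \<phi>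
    proof -
      have sP: "s k \<in> Phi N" for k using s unfolding K_def Phi_alpha_def by auto
      have \<phi>P: "\<phi> \<in> Phi N" using \<phi> \<mu>(2) by simp
      have limN: "AE y in N. (\<lambda>k. s k y) \<longlonglongrightarrow> \<phi> y" using \<mu>(3)[OF lim] .
      have "cc \<theta> \<phi> \<le> 0" if "\<theta> \<in> Theta0" for \<theta>
        using closure_cc[OF sP \<phi>P limN, of \<theta>] that sub0 s unfolding K_def Phia_cc
        by (intro LIMSEQ_le_const2[where X="\<lambda>k. cc \<theta> (s k)"]) auto
      moreover have "V - 1 / (real n + 1) \<le> J \<phi>"
        using closure_J[OF sP \<phi>P limN] s unfolding K_def by (intro LIMSEQ_le_const) auto
      ultimately show ?thesis using \<phi>P unfolding K_def Phia_cc by auto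
    qed
    show "\<exists>k. K k \<subseteq> K i \<inter> K j" for i j
    proof (intro exI[of _ "max i j"])
      have "1 / (real (max i j) + 1) \<le> 1 / (real i + 1)" "1 / (real (max i j) + 1) \<le> 1 / (real j + 1)"
        by (auto simp: frac_le)
      thus "K (max i j) \<subseteq> K i \<inter> K j" unfolding K_def by auto
    qed
  qed
  then obtain \<phi> where \<phi>: "\<And>n. \<phi> \<in> K n" by blast
  have \<phi>a: "\<phi> \<in> Phi_alpha N f Theta0 \<alpha>" using \<phi>[of 0] unfolding K_def by blast
  have "V \<le> J \<phi>"
  proof (rule field_le_epsilon)
    fix e :: real assume e: "0 < e"
    obtain n :: nat where n: "1 / e < real n" using reals_Archimedean2 by blast
    have "1 / (real n + 1) < e" using n e by (simp add: field_simps)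
    moreover have "V - 1 / (real n + 1) \<le> J \<phi>" using \<phi>[of n] unfolding K_def by blast
    ultimately show "V \<le> J \<phi> + e" by simp
  qed
  thus ?thesis using \<phi>a J_le_V by (intro bexI[of _ \<phi>]) (auto intro: order_trans)
qed

end

context main
begin

lemma S1:
  assumes e: "0 < e"
  shows "\<exists>xs. \<forall>\<phi>\<in>Phi N. (\<forall>\<theta>\<in>set xs \<inter> Theta0. cc \<theta> \<phi> \<le> 0) \<longrightarrow> J \<phi> < V + e"
proof (rule ccontr)
  assume "\<not> ?thesis"
  hence ne: "\<exists>\<phi>\<in>Phi N. (\<forall>\<theta>\<in>set xs \<inter> Theta0. cc \<theta> \<phi> \<le> 0) \<and> V + e \<le> J \<phi>" for xs
    by (auto simp: not_less)
  obtain \<mu> where \<mu>: "finite_measure \<mu>" "Phi \<mu> = Phi N" "\<And>P. (AE y in \<mu>. P y) \<Longrightarrow> (AE y in N. P y)"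
    using exists_mu by blast
  interpret mu: finite_measure \<mu> by (rule \<mu>(1))
  define K where "K xs = {\<phi>\<in>Phi N. (\<forall>\<theta>\<in>set xs \<inter> Theta0. cc \<theta> \<phi> \<le> 0) \<and> V + e \<le> J \<phi>}" for xs :: "'t list"
  have "\<exists>\<phi>. \<forall>xs. \<phi> \<in> K xs"
  proof (rule mu.directed_inter)
    show "K xs \<subseteq> Phi \<mu>" for xs unfolding K_def \<mu>(2) by blast
    show "K xs \<noteq> {}" for xs using ne[of xs] unfolding K_def by blast
    show "cvx (K xs)" for xs unfolding cvx_def
    proof (intro ballI allI impI)
      fix \<phi> \<psi> t assume a: "\<phi> \<in> K xs" "\<psi> \<in> K xs" "0 \<le> (t::real)" "t \<le> 1"
      hence P: "\<phi> \<in> Phi N" "\<psi> \<in> Phi N" unfolding K_def by auto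
      have c: "comb t \<phi> \<psi> \<in> Phi N" using Phi_comb P a by blast
      have tx: "t * x + (1 - t) * x = x" for x :: real by (simp add: algebra_simps)
      have "cc \<theta> (comb t \<phi> \<psi>) \<le> 0" if "\<theta> \<in> set xs \<inter> Theta0" for \<theta>
      proof -
        have "cc \<theta> \<phi> \<le> 0" "cc \<theta> \<psi> \<le> 0" using a that unfolding K_def by auto
        moreover have "cc \<theta> (comb t \<phi> \<psi>) = t * cc \<theta> \<phi> + (1 - t) * cc \<theta> \<psi>"
          using aff_cc[of \<theta>] that sub0 P a unfolding aff_def by blast
        ultimately show ?thesis using a by (simp add: add_nonpos_nonpos mult_nonneg_nonpos)
      qed
      moreover have "V + e \<le> J (comb t \<phi> \<psi>)"
      proof -
        have "J (comb t \<phi> \<psi>) = t * J \<phi> + (1 - t) * J \<psi>" using aff_J P a unfolding aff_def by blast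
        moreover have "V + e \<le> J \<phi>" "V + e \<le> J \<psi>" using a unfolding K_def by auto
        moreover have "t * (V + e) \<le> t * J \<phi>" using a calculation(2) by (intro mult_left_mono) auto
        moreover have "(1 - t) * (V + e) \<le> (1 - t) * J \<psi>" using a calculation(3) by (intro mult_left_mono) auto
        moreover have "t * (V + e) + (1 - t) * (V + e) = V + e" using tx[of "V + e"] .
        ultimately show ?thesis by linarith
      qed
      ultimately show "comb t \<phi> \<psi> \<in> K xs" using c unfolding K_def by auto
    qed
    show "\<phi> \<in> K xs" if s: "\<And>k. s k \<in> K xs" and \<phi>: "\<phi> \<in> Phi \<mu>" and lim: "AE y in \<mu>. (\<lambda>k. s k y) \<longlonglongrightarrow> \<phi> y" for xs s \<phi>
    proof -
      have sP: "s k \<in> Phi N" for k using s unfolding K_def by auto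
      have \<phi>P: "\<phi> \<in> Phi N" using \<phi> \<mu>(2) by simp
      have limN: "AE y in N. (\<lambda>k. s k y) \<longlonglongrightarrow> \<phi> y" using \<mu>(3)[OF lim] .
      have "cc \<theta> \<phi> \<le> 0" if "\<theta> \<in> set xs \<inter> Theta0" for \<theta>
        using closure_cc[OF sP \<phi>P limN, of \<theta>] that sub0 s unfolding K_def
        by (intro LIMSEQ_le_const2[where X="\<lambda>k. cc \<theta> (s k)"]) auto
      moreover have "V + e \<le> J \<phi>"
        using closure_J[OF sP \<phi>P limN] s unfolding K_def by (intro LIMSEQ_le_const) auto
      ultimately show ?thesis using \<phi>P unfolding K_def by auto
    qed
    show "\<exists>k. K k \<subseteq> K i \<inter> K j" for i j
      by (intro exI[of _ "i @ j"]) (auto simp: K_def)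
  qed
  then obtain \<phi> where \<phi>: "\<And>xs. \<phi> \<in> K xs" by blast
  have "cc \<theta> \<phi> \<le> 0" if "\<theta> \<in> Theta0" for \<theta> using \<phi>[of "[\<theta>]"] that unfolding K_def by auto
  hence "\<phi> \<in> Phi_alpha N f Theta0 \<alpha>"
    unfolding Phia_cc using \<phi>[of "[]"] unfolding K_def by auto
  hence "J \<phi> \<le> V" by (rule J_le_V)
  moreover have "V + e \<le> J \<phi>" using \<phi>[of "[]"] unfolding K_def by auto
  ultimately show False using e by simp
qed


lemma S3:
  assumes e: "0 < e"
  shows "\<exists>L\<in>finite_measures_on Theta0. dual L \<le> V + e"
proof -
  obtain xs where xs: "\<And>\<phi>. \<phi> \<in> Phi N \<Longrightarrow> (\<forall>\<theta>\<in>set xs \<inter> Theta0. cc \<theta> \<phi> \<le> 0) \<Longrightarrow> J \<phi> < V + e"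
    using S1[OF e] by blast
  define F where "F = set xs \<inter> Theta0"
  have finF: "finite F" unfolding F_def by simp
  have FT: "F \<subseteq> Theta0" unfolding F_def by simp
  have cc0: "cc i (\<lambda>_. 0) < 0" for i unfolding cc_def using alpha by simp
  obtain lm where lm: "\<forall>i\<in>F. 0 \<le> lm i" "\<forall>\<phi>\<in>Phi N. J \<phi> - (\<Sum>i\<in>F. lm i * cc i \<phi>) \<le> V + e"
  proof -
    have "\<exists>lm. (\<forall>i\<in>F. 0 \<le> lm i) \<and> (\<forall>\<phi>\<in>Phi N. J \<phi> - (\<Sum>i\<in>F. lm i * cc i \<phi>) \<le> V + e)"
    proof (rule fin_dual[OF finF cvx_Phi zero_Phi])
      show "cc i (\<lambda>_. 0) < 0" for i by (rule cc0)
      show "aff (Phi N) (cc i)" if "i \<in> F" for i using that FT sub0 by (intro aff_cc) auto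
      show "aff (Phi N) J" by (rule aff_J)
      show "J \<phi> \<le> V + e" if "\<phi> \<in> Phi N" "\<forall>i\<in>F. cc i \<phi> \<le> 0" for \<phi>
        using xs[OF that(1)] that(2) unfolding F_def by (auto intro: less_imp_le)
    qed
    thus ?thesis using that by blast
  qed
  define lm' where "lm' i = max 0 (lm i)" for i
  define Dm where "Dm = density (count_space F) (\<lambda>\<theta>. ennreal (lm' \<theta>))"
  define L where "L = distr Dm (restrict_space borel Theta0) (\<lambda>\<theta>. \<theta>)"
  have sDm: "sets Dm = sets (count_space F)" unfolding Dm_def by simp
  have mid: "(\<lambda>\<theta>. \<theta>) \<in> measurable Dm (restrict_space borel Theta0)"
    unfolding measurable_cong_sets[OF sDm refl] using FT by (auto simp: space_restrict_space)
  have sL: "sets L = sets (restrict_space borel Theta0)" unfolding L_def by simp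
  have "emeasure Dm (space Dm) = (\<Sum>\<theta>\<in>F. ennreal (lm' \<theta>))"
    unfolding Dm_def using finF by (simp add: emeasure_density nn_integral_count_space_finite)
  also have "\<dots> = ennreal (\<Sum>\<theta>\<in>F. lm' \<theta>)" unfolding lm'_def by (intro sum_ennreal) auto
  finally have "finite_measure Dm" by (intro finite_measureI) simp
  hence fL: "finite_measure L" unfolding L_def using mid by (rule finite_measure.finite_measure_distr)
  have LM0: "L \<in> finite_measures_on Theta0" unfolding finite_measures_on_def using sL fL by blast
  have Ladm: "admissible L" using M0_adm[OF LM0] .
  have intL: "(\<integral>\<theta>. cc \<theta> \<phi> \<partial>L) = (\<Sum>\<theta>\<in>F. lm \<theta> * cc \<theta> \<phi>)" if \<phi>: "\<phi> \<in> Phi N" for \<phi>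
  proof -
    have m: "(\<lambda>\<theta>. cc \<theta> \<phi>) \<in> borel_measurable (restrict_space borel Theta0)"
      using cc_meas[OF Ladm \<phi>] measurable_cong_sets[OF sL refl] by blast
    have "(\<integral>\<theta>. cc \<theta> \<phi> \<partial>L) = (\<integral>\<theta>. cc \<theta> \<phi> \<partial>Dm)" unfolding L_def using mid m by (rule integral_distr)
    also have "\<dots> = (\<integral>\<theta>. lm' \<theta> *\<^sub>R cc \<theta> \<phi> \<partial>count_space F)" unfolding Dm_def
      by (intro integral_density) (auto simp: lm'_def)
    also have "\<dots> = (\<Sum>\<theta>\<in>F. lm' \<theta> * cc \<theta> \<phi>)" using finF by (simp add: lebesgue_integral_count_space_finite)
    also have "\<dots> = (\<Sum>\<theta>\<in>F. lm \<theta> * cc \<theta> \<phi>)" using lm(1) unfolding lm'_def by (intro sum.cong) auto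
    finally show ?thesis .
  qed
  have "dual L \<le> V + e"
  proof (rule dual_le)
    fix \<phi> assume \<phi>: "\<phi> \<in> Phi N"
    show "lag \<phi> L \<le> V + e" unfolding lagr_cc intL[OF \<phi>] using lm(2) \<phi> by blast
  qed
  thus ?thesis using LM0 by blast
qed

lemma M0_ne: "null_measure (restrict_space borel Theta0) \<in> finite_measures_on Theta0"
  unfolding finite_measures_on_def by (auto intro!: finite_measureI)

lemma weak: assumes L: "L \<in> finite_measures_on Theta0" shows "V \<le> dual L"
  unfolding V_def
proof (rule cSUP_least[OF Phia_ne])
  fix \<phi> assume \<phi>: "\<phi> \<in> Phi_alpha N f Theta0 \<alpha>"
  have Ladm: "admissible L" using M0_adm[OF L] .
  have sp: "space L = Theta0"
    using sets_eq_imp_space_eq[of L "restrict_space borel Theta0"] L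
    unfolding finite_measures_on_def by (simp add: space_restrict_space)
  have "0 \<le> (\<integral>\<theta>. - cc \<theta> \<phi> \<partial>L)"
    using \<phi> sp unfolding Phia_cc by (intro Bochner_Integration.integral_nonneg) auto
  hence "J \<phi> \<le> lag \<phi> L" unfolding lagr_cc by simp
  also have "\<dots> \<le> dual L" using dual_ge[OF Ladm] \<phi> Phia_sub by blast
  finally show "J \<phi> \<le> dual L" .
qed

lemma duality: "V = (INF L\<in>finite_measures_on Theta0. dual L)"
proof (rule antisym)
  show "V \<le> (INF L\<in>finite_measures_on Theta0. dual L)"
    using M0_ne weak by (intro cINF_greatest) auto
  have bb: "bdd_below (dual ` finite_measures_on Theta0)" using weak by (intro bdd_belowI[of _ V]) auto
  show "(INF L\<in>finite_measures_on Theta0. dual L) \<le> V"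
  proof (rule field_le_epsilon)
    fix e :: real assume e: "0 < e"
    obtain L where L: "L \<in> finite_measures_on Theta0" "dual L \<le> V + e" using S3[OF e] by blast
    have "(INF L\<in>finite_measures_on Theta0. dual L) \<le> dual L" by (rule cINF_lower[OF bb L(1)])
    thus "(INF L\<in>finite_measures_on Theta0. dual L) \<le> V + e" using L(2) by simp
  qed
qed

end

lemma NP_exists:
  fixes N :: "'y measure" and g h :: "'y \<Rightarrow> real"
  assumes gm[measurable]: "g \<in> borel_measurable N" and hm[measurable]: "h \<in> borel_measurable N"
    and g0: "\<And>y. y \<in> space N \<Longrightarrow> 0 \<le> g y" and h0: "\<And>y. y \<in> space N \<Longrightarrow> 0 \<le> h y"
    and gi: "integrable N g" and hi: "integrable N h" and g1: "(\<integral>y. g y \<partial>N) = 1" and h1: "(\<integral>y. h y \<partial>N) = 1"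
    and alpha: "0 < \<alpha>" "\<alpha> < 1"
  shows "\<exists>cv \<kappa>. is_level_NP N \<alpha> h g cv \<kappa>"
proof -
  define G where "G c = (\<integral>y. (if g y > c * h y then 1 else 0) * h y \<partial>N)" for c
  define E where "E c = (\<integral>y. (if g y \<ge> c * h y then 1 else 0) * h y \<partial>N)" for c
  define P where "P c = (\<integral>y. (if g y = c * h y then 1 else 0) * h y \<partial>N)" for c
  have ind_int: "integrable N (\<lambda>y. (if Q y then 1 else 0) * h y)" if [measurable]: "Measurable.pred N Q" for Q
  proof (rule Bochner_Integration.integrable_bound[OF hi])
    show "(\<lambda>y. (if Q y then 1 else 0) * h y) \<in> borel_measurable N" by measurable
    show "AE y in N. norm ((if Q y then 1 else 0) * h y) \<le> norm (h y)" by (intro AE_I2) auto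
  qed
  have i1: "integrable N (\<lambda>y. (if g y > c * h y then 1 else 0) * h y)" for c by (rule ind_int) measurable
  have i2: "integrable N (\<lambda>y. (if g y = c * h y then 1 else 0) * h y)" for c by (rule ind_int) measurable
  have EGP: "E c = G c + P c" for c
  proof -
    have "E c = (\<integral>y. (if g y > c * h y then 1 else 0) * h y + (if g y = c * h y then 1 else 0) * h y \<partial>N)"
      unfolding E_def by (intro Bochner_Integration.integral_cong) auto
    thus ?thesis unfolding G_def P_def using i1 i2 by simp
  qed
  have P0: "0 \<le> P c" for c unfolding P_def using h0 by (intro Bochner_Integration.integral_nonneg) auto
  have Gmono: "G c' \<le> G c" if "c \<le> c'" for c c'
    unfolding G_def
  proof (rule Bochner_Integration.integral_mono[OF i1 i1])
    fix y assume y: "y \<in> space N"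
    have "c * h y \<le> c' * h y" using that h0[OF y] by (rule mult_right_mono)
    thus "(if g y > c' * h y then 1 else 0) * h y \<le> (if g y > c * h y then 1 else 0) * h y"
      using h0[OF y] by auto
  qed
  define S where "S = {c. 0 \<le> c \<and> G c \<le> \<alpha>}"
  have S2: "2 / \<alpha> \<in> S"
  proof -
    have "G (2 / \<alpha>) \<le> (\<integral>y. (\<alpha> / 2) * g y \<partial>N)"
      unfolding G_def
    proof (rule Bochner_Integration.integral_mono[OF i1])
      show "integrable N (\<lambda>y. \<alpha> / 2 * g y)" using gi by simp
      fix y assume y: "y \<in> space N"
      show "(if g y > 2 / \<alpha> * h y then 1 else 0) * h y \<le> \<alpha> / 2 * g y"
      proof (cases "g y > 2 / \<alpha> * h y")
        case True
        hence "2 * h y < \<alpha> * g y" using alpha by (simp add: field_simps)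
        thus ?thesis using True by simp
      next
        case False thus ?thesis using g0[OF y] alpha by simp
      qed
    qed
    also have "\<dots> = \<alpha> / 2" using g1 by simp
    finally show ?thesis unfolding S_def using alpha by simp
  qed
  have Sne: "S \<noteq> {}" using S2 by blast
  have Sbb: "bdd_below S" unfolding S_def by (intro bdd_belowI[of _ 0]) auto
  define cv where "cv = Inf S"
  have cv0: "0 \<le> cv" unfolding cv_def using Sne by (intro cInf_greatest) (auto simp: S_def)
  have l1: "(\<lambda>n. 1 / (real n + 1)) \<longlonglongrightarrow> 0"
    using LIMSEQ_ignore_initial_segment[OF lim_1_over_n, of 1] by (simp add: add.commute)
  have Gcv: "G cv \<le> \<alpha>"
  proof -
    have Gn: "G (cv + 1 / (real n + 1)) \<le> \<alpha>" for n
    proof -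
      have "Inf S < cv + 1 / (real n + 1)" unfolding cv_def by simp
      from cInf_lessD[OF Sne this] obtain s where s: "s \<in> S" "s < cv + 1 / (real n + 1)" by blast
      thus ?thesis using Gmono[of s "cv + 1 / (real n + 1)"] unfolding S_def by auto
    qed
    have "(\<lambda>n. G (cv + 1 / (real n + 1))) \<longlonglongrightarrow> G cv"
      unfolding G_def
    proof (rule integral_dominated_convergence[where w=h])
      show "(\<lambda>y. (if g y > cv * h y then 1 else 0) * h y) \<in> borel_measurable N" by measurable
      show "(\<lambda>y. (if g y > (cv + 1 / (real n + 1)) * h y then 1 else 0) * h y) \<in> borel_measurable N" for n
        by measurable
      show "integrable N h" by (rule hi)
      show "AE y in N. norm ((if g y > (cv + 1 / (real n + 1)) * h y then 1 else 0) * h y) \<le> h y" for n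
        using h0 by (intro AE_I2) auto
      show "AE y in N. (\<lambda>n. (if g y > (cv + 1 / (real n + 1)) * h y then 1 else 0) * h y)
          \<longlonglongrightarrow> (if g y > cv * h y then 1 else 0) * h y"
      proof (rule AE_I2)
        fix y assume y: "y \<in> space N"
        show "(\<lambda>n. (if g y > (cv + 1 / (real n + 1)) * h y then 1 else 0) * h y)
          \<longlonglongrightarrow> (if g y > cv * h y then 1 else 0) * h y"
        proof (cases "g y > cv * h y")
          case True
          have "(\<lambda>n. (cv + 1 / (real n + 1)) * h y) \<longlonglongrightarrow> (cv + 0) * h y"
            by (intro tendsto_mult_right tendsto_add tendsto_const l1)
          hence "eventually (\<lambda>n. (cv + 1 / (real n + 1)) * h y < g y) sequentially"
            using True by (intro order_tendstoD(2)) auto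
          hence "eventually (\<lambda>n. (if g y > (cv + 1 / (real n + 1)) * h y then 1 else 0) * h y = (if g y > cv * h y then 1 else 0) * h y) sequentially"
            by (rule eventually_mono) (use True in auto)
          thus ?thesis by (rule tendsto_eventually)
        next
          case False
          have "(cv + 1 / (real n + 1)) * h y \<ge> cv * h y" for n using h0[OF y] by (intro mult_right_mono) auto
          hence "\<not> g y > (cv + 1 / (real n + 1)) * h y" for n using False by (meson le_less_trans)
          hence e: "(\<lambda>n. (if g y > (cv + 1 / (real n + 1)) * h y then 1 else 0) * h y) = (\<lambda>n. 0)"
            by (intro ext) simp
          show ?thesis unfolding e using False by simp
        qed
      qed
    qed
    thus ?thesis using Gn by (intro LIMSEQ_le_const2) auto
  qed
  have Ecv: "\<alpha> \<le> E cv"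
  proof (cases "cv = 0")
    case True
    have "E 0 = (\<integral>y. h y \<partial>N)" unfolding E_def using g0 by (intro Bochner_Integration.integral_cong) auto
    thus ?thesis using True h1 alpha by simp
  next
    case False
    hence cvp: "0 < cv" using cv0 by simp
    define cn where "cn n = cv - cv / (real n + 2)" for n :: nat
    have cn: "0 \<le> cn n" "cn n < cv" for n unfolding cn_def using cvp by (auto simp: field_simps)
    have Gn: "\<alpha> < G (cn n)" for n
    proof (rule ccontr)
      assume "\<not> \<alpha> < G (cn n)"
      hence "cn n \<in> S" using cn unfolding S_def by auto
      hence "cv \<le> cn n" unfolding cv_def using Sbb by (intro cInf_lower)
      thus False using cn(2)[of n] by simp
    qed
    have cnl: "cn \<longlonglongrightarrow> cv - 0"
      unfolding cn_def
    proof (intro tendsto_diff tendsto_const)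
      have "(\<lambda>n. cv * (1 / (real n + 2))) \<longlonglongrightarrow> cv * 0"
      proof (intro tendsto_mult tendsto_const)
        have "(\<lambda>n. 1 / (real (n + 2))) \<longlonglongrightarrow> 0"
          using LIMSEQ_ignore_initial_segment[OF lim_1_over_n, of 2] by simp
        thus "(\<lambda>n. 1 / (real n + 2)) \<longlonglongrightarrow> 0" by (simp add: add.commute)
      qed
      thus "(\<lambda>n. cv / (real n + 2)) \<longlonglongrightarrow> 0" by simp
    qed
    have "(\<lambda>n. G (cn n)) \<longlonglongrightarrow> E cv"
      unfolding G_def E_def
    proof (rule integral_dominated_convergence[where w=h])
      show "(\<lambda>y. (if g y \<ge> cv * h y then 1 else 0) * h y) \<in> borel_measurable N" by measurable
      show "(\<lambda>y. (if g y > cn n * h y then 1 else 0) * h y) \<in> borel_measurable N" for n by measurable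
      show "integrable N h" by (rule hi)
      show "AE y in N. norm ((if g y > cn n * h y then 1 else 0) * h y) \<le> h y" for n
        using h0 by (intro AE_I2) auto
      show "AE y in N. (\<lambda>n. (if g y > cn n * h y then 1 else 0) * h y)
          \<longlonglongrightarrow> (if g y \<ge> cv * h y then 1 else 0) * h y"
      proof (rule AE_I2)
        fix y assume y: "y \<in> space N"
        show "(\<lambda>n. (if g y > cn n * h y then 1 else 0) * h y) \<longlonglongrightarrow> (if g y \<ge> cv * h y then 1 else 0) * h y"
        proof (cases "h y = 0")
          case True thus ?thesis by simp
        next
          case False
          hence hp: "0 < h y" using h0[OF y] by simp
          show ?thesis
          proof (cases "g y \<ge> cv * h y")
            case True
            have "cn n * h y < g y" for n using cn(2)[of n] hp True by (meson mult_strict_right_mono less_le_trans)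
            thus ?thesis using True by simp
          next
            case False
            have "(\<lambda>n. cn n * h y) \<longlonglongrightarrow> (cv - 0) * h y" by (intro tendsto_mult_right cnl)
            hence "eventually (\<lambda>n. g y < cn n * h y) sequentially"
              using False by (intro order_tendstoD(1)) auto
            hence "eventually (\<lambda>n. (if g y > cn n * h y then 1 else 0) * h y = (if g y \<ge> cv * h y then 1 else 0) * h y) sequentially"
              by (rule eventually_mono) (use False in auto)
            thus ?thesis by (rule tendsto_eventually)
          qed
        qed
      qed
    qed
    thus ?thesis using Gn by (intro LIMSEQ_le_const[where X="\<lambda>n. G (cn n)"]) (auto intro: less_imp_le)
  qed
  define \<kappa> where "\<kappa> = (if P cv = 0 then 0 else (\<alpha> - G cv) / P cv)"
  have k01: "0 \<le> \<kappa>" "\<kappa> \<le> 1" using Gcv Ecv EGP[of cv] P0[of cv] unfolding \<kappa>_def by (auto simp: field_simps)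
  have "(\<integral>y. NP_test h g cv \<kappa> y * h y \<partial>N) =
      (\<integral>y. (if g y > cv * h y then 1 else 0) * h y + \<kappa> * ((if g y = cv * h y then 1 else 0) * h y) \<partial>N)"
    unfolding NP_test_def by (intro Bochner_Integration.integral_cong) auto
  also have "\<dots> = G cv + \<kappa> * P cv" unfolding G_def P_def using i1 i2 by simp
  also have "\<dots> = \<alpha>" using Gcv Ecv EGP[of cv] P0[of cv] unfolding \<kappa>_def by auto
  finally show ?thesis unfolding is_level_NP_def using cv0 k01 by blast
qed

context main
begin

abbreviation "A \<equiv> (\<integral>y. \<phi>ah y * g y \<partial>N)"
abbreviation "beta L \<equiv> beta_LF N f \<alpha> g L"

lemma g_le1: assumes a: "\<phi> \<in> Phi N" shows "(\<integral>y. \<phi> y * g y \<partial>N) \<le> 1"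
  using mixint_bd[OF Omega_adm Phi_meas[OF a] Phi_bd[OF a]] prob_space.prob_space[OF Omega_prob] by auto

lemma beta_bdd: "bdd_above {(\<integral>y. \<phi> y * g y \<partial>N) | \<phi>. \<phi> \<in> Phi N \<and> (\<integral>y. \<phi> y * mix L f y \<partial>N) \<le> \<alpha>}"
  using g_le1 by (intro bdd_aboveI[of _ 1]) auto

lemma beta_ge: "\<phi> \<in> Phi N \<Longrightarrow> (\<integral>y. \<phi> y * mix L f y \<partial>N) \<le> \<alpha> \<Longrightarrow> (\<integral>y. \<phi> y * g y \<partial>N) \<le> beta L"
  unfolding beta_LF_def by (rule cSup_upper[OF _ beta_bdd]) blast

lemma beta_le: "(\<And>\<phi>. \<phi> \<in> Phi N \<Longrightarrow> (\<integral>y. \<phi> y * mix L f y \<partial>N) \<le> \<alpha> \<Longrightarrow> (\<integral>y. \<phi> y * g y \<partial>N) \<le> C) \<Longrightarrow> beta L \<le> C"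
  unfolding beta_LF_def
proof (rule cSup_least)
  show "{(\<integral>y. \<phi> y * g y \<partial>N) | \<phi>. \<phi> \<in> Phi N \<and> (\<integral>y. \<phi> y * mix L f y \<partial>N) \<le> \<alpha>} \<noteq> {}"
    using zero_Phi alpha by (auto intro!: exI[of _ "\<lambda>_. 0"])
qed auto

lemma mix_scale: "0 \<le> r \<Longrightarrow> mix (scale_measure (ennreal r) L) f y = r * mix L f y"
  unfolding mix_def by (rule integral_scale)

lemma adm_scale: assumes L: "admissible L" and r: "0 \<le> r" shows "admissible (scale_measure (ennreal r) L)"
proof -
  interpret L: finite_measure L using adm_fin[OF L] .
  have "emeasure (scale_measure (ennreal r) L) (space (scale_measure (ennreal r) L)) \<noteq> \<infinity>"
    using L.emeasure_finite[of "space L"] by (simp add: space_scale_measure ennreal_mult_eq_top_iff)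
  thus ?thesis using L unfolding admissible_def by (auto intro: finite_measureI)
qed

lemma meas_scale: "0 \<le> r \<Longrightarrow> measure (scale_measure (ennreal r) L) (space (scale_measure (ennreal r) L)) = r * measure L (space L)"
  by (simp add: space_scale_measure)

lemma B1:
  assumes L: "admissible L" and c: "0 < measure L (space L)"
  shows "beta (scale_measure (ennreal (1 / measure L (space L))) L) \<le> dual L + A"
proof (rule beta_le)
  define c where "c = measure L (space L)"
  fix \<phi> assume \<phi>: "\<phi> \<in> Phi N" and lev: "(\<integral>y. \<phi> y * mix (scale_measure (ennreal (1 / measure L (space L))) L) f y \<partial>N) \<le> \<alpha>"
  have "(\<integral>y. \<phi> y * mix (scale_measure (ennreal (1 / measure L (space L))) L) f y \<partial>N) = (1 / c) * (\<integral>y. \<phi> y * mix L f y \<partial>N)"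
    unfolding mix_scale[of "1 / measure L (space L)", OF divide_nonneg_nonneg[OF zero_le_one measure_nonneg]]
    unfolding c_def by (simp add: mult.left_commute)
  hence "(\<integral>y. \<phi> y * mix L f y \<partial>N) = c * (\<integral>y. \<phi> y * mix (scale_measure (ennreal (1 / measure L (space L))) L) f y \<partial>N)"
    using c unfolding c_def by simp
  also have "\<dots> \<le> c * \<alpha>" using lev c unfolding c_def by (intro mult_left_mono) auto
  finally have "(\<integral>y. \<phi> y * mix L f y \<partial>N) \<le> \<alpha> * c" by (simp add: mult.commute)
  hence "J \<phi> \<le> lag \<phi> L" using lagr_eq[OF L \<phi>] unfolding c_def by (simp add: mult.commute)
  also have "\<dots> \<le> dual L" using dual_ge[OF L \<phi>] .
  finally show "(\<integral>y. \<phi> y * g y \<partial>N) \<le> dual L + A" using J_eq[OF \<phi>] by simp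
qed

lemma prob_adm: "L \<in> prob_distributions_on Theta0 \<Longrightarrow> admissible L"
  using sub0 unfolding prob_distributions_on_def admissible_def prob_space_def by blast

lemma B2:
  assumes L: "L \<in> prob_distributions_on Theta0"
  shows "V + A \<le> beta L"
proof -
  have Ladm: "admissible L" using prob_adm[OF L] .
  have pL: "prob_space L" using L unfolding prob_distributions_on_def by blast
  have sp: "space L = Theta0"
    using sets_eq_imp_space_eq[of L "restrict_space borel Theta0"] L
    unfolding prob_distributions_on_def by (simp add: space_restrict_space)
  have "J \<phi> \<le> beta L - A" if \<phi>: "\<phi> \<in> Phi_alpha N f Theta0 \<alpha>" for \<phi>
  proof -
    have P: "\<phi> \<in> Phi N" using \<phi> Phia_sub by blast
    have "(\<integral>y. \<phi> y * mix L f y \<partial>N) = (\<integral>\<theta>. (\<integral>y. \<phi> y * f \<theta> y \<partial>N) \<partial>L)"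
      using fubini[OF Ladm Phi_meas[OF P] Phi_bd[OF P]] by simp
    also have "\<dots> \<le> (\<integral>\<theta>. \<alpha> \<partial>L)"
    proof (rule Bochner_Integration.integral_mono)
      interpret L: finite_measure L using adm_fin[OF Ladm] .
      show "integrable L (\<lambda>\<theta>. \<integral>y. \<phi> y * f \<theta> y \<partial>N)"
        using intg_meas[OF Ladm Phi_meas[OF P]] intg_bound[OF _ Phi_meas[OF P] Phi_bd[OF P]] adm_space[OF Ladm]
        by (intro L.bdd_integrable[where B=1]) auto
      show "integrable L (\<lambda>\<theta>. \<alpha>)" by simp
      show "(\<integral>y. \<phi> y * f \<theta> y \<partial>N) \<le> \<alpha>" if "\<theta> \<in> space L" for \<theta>
        using \<phi> that sp unfolding Phi_alpha_def by auto
    qed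
    also have "\<dots> = \<alpha>" using prob_space.prob_space[OF pL] by simp
    finally have "(\<integral>y. \<phi> y * g y \<partial>N) \<le> beta L" by (rule beta_ge[OF P])
    thus ?thesis using J_eq[OF P] by simp
  qed
  hence "V \<le> beta L - A" unfolding V_def by (intro cSUP_least[OF Phia_ne]) auto
  thus ?thesis by simp
qed


definition "M0star = {L \<in> finite_measures_on Theta0. \<forall>L'\<in>finite_measures_on Theta0. dual L \<le> dual L'}"
definition "PhiStar = {\<phi> \<in> Phi_alpha N f Theta0 \<alpha>. \<forall>\<psi>\<in>Phi_alpha N f Theta0 \<alpha>. J \<psi> \<le> J \<phi>}"

lemma M0_space: "L \<in> finite_measures_on Theta0 \<Longrightarrow> space L = Theta0"
  using sets_eq_imp_space_eq[of L "restrict_space borel Theta0"]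
  unfolding finite_measures_on_def by (simp add: space_restrict_space)

lemma lag_ge_J: assumes L: "L \<in> finite_measures_on Theta0" and \<phi>: "\<phi> \<in> Phi_alpha N f Theta0 \<alpha>"
  shows "J \<phi> \<le> lag \<phi> L"
proof -
  have "0 \<le> (\<integral>\<theta>. - cc \<theta> \<phi> \<partial>L)"
    using \<phi> M0_space[OF L] unfolding Phia_cc by (intro Bochner_Integration.integral_nonneg) auto
  thus ?thesis unfolding lagr_cc by simp
qed

lemma star_le_V: assumes "L \<in> M0star" shows "dual L \<le> V"
  unfolding duality using assms M0_ne unfolding M0star_def by (intro cINF_greatest) auto

lemma star_V: assumes "\<phi> \<in> PhiStar" shows "V \<le> J \<phi>"
  unfolding V_def using assms Phia_ne unfolding PhiStar_def by (intro cSUP_least) auto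

lemma part5:
  assumes L: "L \<in> M0star" and pos: "emeasure L (space L) > 0"
  shows "least_favorable N f Theta0 \<alpha> g (scale_measure (ennreal (1 / measure L (space L))) L)"
proof -
  have LM: "L \<in> finite_measures_on Theta0" using L unfolding M0star_def by blast
  have Ladm: "admissible L" using M0_adm[OF LM] .
  interpret L: finite_measure L using adm_fin[OF Ladm] .
  define c where "c = measure L (space L)"
  have c: "0 < c" using pos L.emeasure_eq_measure[of "space L"] unfolding c_def by simp
  define P where "P = scale_measure (ennreal (1 / c)) L"
  have "emeasure P (space P) = ennreal (1 / c) * ennreal c"
    unfolding P_def by (simp add: space_scale_measure L.emeasure_eq_measure c_def)
  also have "\<dots> = 1" using c by (simp flip: ennreal_mult)
  finally have "prob_space P" by (rule prob_spaceI)
  moreover have "sets P = sets (restrict_space borel Theta0)" unfolding P_def using LM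
    unfolding finite_measures_on_def by simp
  ultimately have Pd: "P \<in> prob_distributions_on Theta0" unfolding prob_distributions_on_def by blast
  have "beta P \<le> dual L + A" unfolding P_def c_def using B1[OF Ladm c[unfolded c_def]] .
  also have "\<dots> \<le> V + A" using star_le_V[OF L] by simp
  finally have bP: "beta P \<le> V + A" .
  show ?thesis unfolding least_favorable_def P_def[symmetric] c_def[symmetric]
    using Pd bP B2 by (auto intro: order_trans)
qed

lemma AE_char:
  assumes L: "L \<in> M0star" and \<phi>: "\<phi> \<in> PhiStar" and null: "emeasure N {y \<in> space N. g y = mix L f y} = 0"
  shows "AE y in N. \<phi> y = (if g y > mix L f y then 1 else 0)"
proof -
  have LM: "L \<in> finite_measures_on Theta0" using L unfolding M0star_def by blast
  have Ladm: "admissible L" using M0_adm[OF LM] .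
  have \<phi>a: "\<phi> \<in> Phi_alpha N f Theta0 \<alpha>" using \<phi> unfolding PhiStar_def by blast
  have \<phi>P: "\<phi> \<in> Phi N" using \<phi>a Phia_sub by blast
  have "\<forall>\<psi>\<in>Phi N. lag \<psi> L \<le> lag \<phi> L"
  proof
    fix \<psi> assume "\<psi> \<in> Phi N"
    hence "lag \<psi> L \<le> dual L" by (rule dual_ge[OF Ladm])
    also have "\<dots> \<le> V" by (rule star_le_V[OF L])
    also have "\<dots> \<le> J \<phi>" by (rule star_V[OF \<phi>])
    also have "\<dots> \<le> lag \<phi> L" by (rule lag_ge_J[OF LM \<phi>a])
    finally show "lag \<psi> L \<le> lag \<phi> L" .
  qed
  from part2(3)[OF Ladm \<phi>P this]
  have ae: "AE y in N. (g y > mix L f y \<longrightarrow> \<phi> y = 1) \<and> (g y < mix L f y \<longrightarrow> \<phi> y = 0)" .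
  have "AE y in N. g y \<noteq> mix L f y"
  proof (rule AE_I')
    note [measurable] = mix_meas[OF Ladm] mix_meas[OF Omega_adm]
    show "{y \<in> space N. g y = mix L f y} \<in> null_sets N" using null by (auto simp: null_sets_def)
  qed auto
  with ae show ?thesis by eventually_elim auto
qed

lemma part4:
  assumes null: "\<forall>L\<in>M0star. emeasure N {y \<in> space N. g y = mix L f y} = 0"
    and L1: "L1 \<in> M0star" and L2: "L2 \<in> M0star" and p1: "\<phi>1 \<in> PhiStar" and p2: "\<phi>2 \<in> PhiStar"
  shows "AE y in N. (if g y > mix L1 f y then 1 else 0) = (if g y > mix L2 f y then (1::real) else 0) \<and>
            (if g y > mix L2 f y then 1 else 0) = \<phi>1 y \<and> \<phi>1 y = \<phi>2 y"
proof -
  have a: "AE y in N. \<phi>1 y = (if g y > mix L1 f y then 1 else 0)" using AE_char[OF L1 p1] null L1 by blast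
  have b: "AE y in N. \<phi>1 y = (if g y > mix L2 f y then 1 else 0)" using AE_char[OF L2 p1] null L2 by blast
  have c: "AE y in N. \<phi>2 y = (if g y > mix L2 f y then 1 else 0)" using AE_char[OF L2 p2] null L2 by blast
  from a b c show ?thesis by eventually_elim auto
qed

lemma part6:
  assumes lf: "least_favorable N f Theta0 \<alpha> g L"
  shows "(\<exists>cv \<kappa>. is_level_NP N \<alpha> (mix L f) g cv \<kappa>) \<and>
         (\<forall>cv \<kappa>. is_level_NP N \<alpha> (mix L f) g cv \<kappa> \<longrightarrow> scale_measure (ennreal cv) L \<in> M0star)"
proof -
  have Ld: "L \<in> prob_distributions_on Theta0" using lf unfolding least_favorable_def by blast
  have Ladm: "admissible L" using prob_adm[OF Ld] .
  have pL: "prob_space L" using Ld unfolding prob_distributions_on_def by blast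
  have m1: "measure L (space L) = 1" using prob_space.prob_space[OF pL] .
  note [measurable] = mix_meas[OF Ladm] mix_meas[OF Omega_adm]
  have h1: "(\<integral>y. mix L f y \<partial>N) = 1" using mix_total[OF Ladm] m1 by simp
  have ex: "\<exists>cv \<kappa>. is_level_NP N \<alpha> (mix L f) g cv \<kappa>"
    by (rule NP_exists[OF mix_meas[OF Omega_adm] mix_meas[OF Ladm] mix_nonneg[OF Omega_adm] mix_nonneg[OF Ladm]
      mix_int[OF Omega_adm] mix_int[OF Ladm] g_total h1 alpha])
  have "scale_measure (ennreal cv) L \<in> M0star" if np: "is_level_NP N \<alpha> (mix L f) g cv \<kappa>" for cv \<kappa>
  proof -
    define h where "h = mix L f"
    define T where "T = NP_test h g cv \<kappa>"
    have cv: "0 \<le> cv" "0 \<le> \<kappa>" "\<kappa> \<le> 1" and lev: "(\<integral>y. T y * h y \<partial>N) = \<alpha>"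
      using np unfolding is_level_NP_def T_def h_def by auto
    have TP: "T \<in> Phi N" unfolding T_def NP_test_def Phi_def h_def using cv by auto
    define C where "C = scale_measure (ennreal cv) L"
    have Cadm: "admissible C" unfolding C_def by (rule adm_scale[OF Ladm cv(1)])
    have CM: "C \<in> finite_measures_on Theta0"
      using Cadm Ld unfolding C_def finite_measures_on_def prob_distributions_on_def admissible_def by auto
    have mC: "mix C f y = cv * h y" for y unfolding C_def h_def by (rule mix_scale[OF cv(1)])
    have msC: "measure C (space C) = cv" unfolding C_def using meas_scale[OF cv(1), of L] m1 by simp
    have dC: "dual C \<le> (\<integral>y. T y * g y \<partial>N) - A"
    proof (rule dual_le)
      fix \<psi> assume \<psi>: "\<psi> \<in> Phi N"
      have "(\<integral>y. \<psi> y * (g y - mix C f y) \<partial>N) \<le> (\<integral>y. T y * (g y - mix C f y) \<partial>N)"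
      proof (rule Bochner_Integration.integral_mono)
        show "integrable N (\<lambda>y. \<psi> y * (g y - mix C f y))" by (rule intD[OF Cadm Phi_meas[OF \<psi>] Phi_bd[OF \<psi>]])
        show "integrable N (\<lambda>y. T y * (g y - mix C f y))" by (rule intD[OF Cadm Phi_meas[OF TP] Phi_bd[OF TP]])
        fix y assume y: "y \<in> space N"
        have "0 \<le> \<psi> y" "\<psi> y \<le> 1" using \<psi> y unfolding Phi_def by auto
        thus "\<psi> y * (g y - mix C f y) \<le> T y * (g y - mix C f y)"
          unfolding mC T_def NP_test_def
          by (auto simp: mult_le_cancel_right1 mult_nonneg_nonpos)
      qed
      also have "(\<integral>y. T y * (g y - mix C f y) \<partial>N) = (\<integral>y. T y * g y \<partial>N) - cv * (\<integral>y. T y * h y \<partial>N)"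
      proof -
        have "(\<integral>y. T y * (g y - mix C f y) \<partial>N) = (\<integral>y. T y * g y - cv * (T y * h y) \<partial>N)"
          unfolding mC by (simp add: algebra_simps)
        also have "\<dots> = (\<integral>y. T y * g y \<partial>N) - cv * (\<integral>y. T y * h y \<partial>N)"
          using mixint[OF Omega_adm Phi_meas[OF TP] Phi_bd[OF TP]] mixint[OF Ladm Phi_meas[OF TP] Phi_bd[OF TP]]
          unfolding h_def by simp
        finally show ?thesis .
      qed
      finally have "(\<integral>y. \<psi> y * (g y - mix C f y) \<partial>N) \<le> (\<integral>y. T y * g y \<partial>N) - cv * \<alpha>" using lev by simp
      thus "lag \<psi> C \<le> (\<integral>y. T y * g y \<partial>N) - A" unfolding lag_D[OF Cadm \<psi>] msC by (simp add: mult.commute)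
    qed
    have TL: "(\<integral>y. T y * g y \<partial>N) \<le> beta L" using beta_ge[OF TP] lev unfolding h_def by simp
    have "dual C \<le> dual L'" if L': "L' \<in> finite_measures_on Theta0" for L'
    proof -
      have L'adm: "admissible L'" using M0_adm[OF L'] .
      interpret L': finite_measure L' using adm_fin[OF L'adm] .
      show ?thesis
      proof (cases "measure L' (space L') = 0")
        case True
        have "\<bar>\<integral>y. T y * mix L' f y \<partial>N\<bar> \<le> 1 * measure L' (space L')"
          by (rule mixint_bd[OF L'adm Phi_meas[OF TP] Phi_bd[OF TP]])
        hence "lag T L' = (\<integral>y. T y * g y \<partial>N) - A" using True lagr_eq[OF L'adm TP] J_eq[OF TP] by simp
        hence "(\<integral>y. T y * g y \<partial>N) - A \<le> dual L'" using dual_ge[OF L'adm TP] by simp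
        thus ?thesis using dC by simp
      next
        case False
        hence c': "0 < measure L' (space L')" using measure_nonneg[of L' "space L'"] by linarith
        define P where "P = scale_measure (ennreal (1 / measure L' (space L'))) L'"
        have "emeasure P (space P) = ennreal (1 / measure L' (space L')) * ennreal (measure L' (space L'))"
          unfolding P_def by (simp add: space_scale_measure L'.emeasure_eq_measure)
        also have "\<dots> = 1" using c' by (simp flip: ennreal_mult)
        finally have "prob_space P" by (rule prob_spaceI)
        moreover have "sets P = sets (restrict_space borel Theta0)" unfolding P_def using L'
          unfolding finite_measures_on_def by simp
        ultimately have Pd: "P \<in> prob_distributions_on Theta0" unfolding prob_distributions_on_def by blast
        have "beta L \<le> beta P" using lf Pd unfolding least_favorable_def by blast
        also have "\<dots> \<le> dual L' + A" unfolding P_def by (rule B1[OF L'adm c'])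
        finally show ?thesis using dC TL by simp
      qed
    qed
    thus ?thesis using CM unfolding M0star_def C_def by blast
  qed
  thus ?thesis using ex by blast
qed

end

theorem lemma3:
  fixes N :: "'y::metric_space measure"
    and f :: "'t::euclidean_space \<Rightarrow> 'y \<Rightarrow> real"
    and Theta Theta0 Theta1 :: "'t set"
    and \<alpha> :: real and \<phi>ah :: "'y \<Rightarrow> real" and \<Omega> :: "'t measure"
  assumes sigma_fin: "sigma_finite_measure N"
    and sets_N: "sets N = sets borel"
    and joint_meas: "(\<lambda>p. f (fst p) (snd p)) \<in> borel_measurable (restrict_space (borel \<Otimes>\<^sub>M N) (Theta \<times> space N))"
    and dens_nonneg: "\<And>\<theta> y. \<theta> \<in> Theta \<Longrightarrow> y \<in> space N \<Longrightarrow> 0 \<le> f \<theta> y"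
    and dens_one: "\<And>\<theta>. \<theta> \<in> Theta \<Longrightarrow> (\<integral>\<^sup>+ y. ennreal (f \<theta> y) \<partial>N) = 1"
    and sub0: "Theta0 \<subseteq> Theta" and sub1: "Theta1 \<subseteq> Theta"
    and disj: "Theta0 \<inter> Theta1 = {}"
    and borel0: "Theta0 \<in> sets borel" and borel1: "Theta1 \<in> sets borel"
    and alpha: "0 < \<alpha>" "\<alpha> < 1"
    and ah: "\<phi>ah \<in> Phi_alpha N f Theta0 \<alpha>"
    and Omega: "\<Omega> \<in> prob_distributions_on Theta1"
  defines "g \<equiv> mix \<Omega> f"
    and "M0 \<equiv> finite_measures_on Theta0"
    and "PhiStar \<equiv> {\<phi> \<in> Phi_alpha N f Theta0 \<alpha>. \<forall>\<psi>\<in>Phi_alpha N f Theta0 \<alpha>. objP N \<phi>ah (mix \<Omega> f) \<psi> \<le> objP N \<phi>ah (mix \<Omega> f) \<phi>}"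
    and "PhiStarL \<equiv> (\<lambda>\<Lambda>. {\<phi> \<in> Phi N. \<forall>\<psi>\<in>Phi N. lagr N f \<alpha> \<phi>ah (mix \<Omega> f) \<psi> \<Lambda> \<le> lagr N f \<alpha> \<phi>ah (mix \<Omega> f) \<phi> \<Lambda>})"
    and "M0star \<equiv> {\<Lambda> \<in> finite_measures_on Theta0. \<forall>\<Lambda>'\<in>finite_measures_on Theta0. dualf N f \<alpha> \<phi>ah (mix \<Omega> f) \<Lambda> \<le> dualf N f \<alpha> \<phi>ah (mix \<Omega> f) \<Lambda>'}"
  shows
    "PhiStar \<noteq> {}
     \<and> (\<forall>\<Lambda>\<in>M0. PhiStarL \<Lambda> \<noteq> {} \<and>
          (\<forall>\<phi>\<in>PhiStarL \<Lambda>. \<exists>\<kappa>\<in>Phi N. AE y in N.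
              (g y > mix \<Lambda> f y \<longrightarrow> \<phi> y = 1) \<and>
              (g y = mix \<Lambda> f y \<longrightarrow> \<phi> y = \<kappa> y) \<and>
              (g y < mix \<Lambda> f y \<longrightarrow> \<phi> y = 0)))
     \<and> (SUP \<phi>\<in>Phi_alpha N f Theta0 \<alpha>. objP N \<phi>ah g \<phi>) = (INF \<Lambda>\<in>M0. dualf N f \<alpha> \<phi>ah g \<Lambda>)
     \<and> ((M0star \<noteq> {} \<and> (\<forall>\<Lambda>\<in>M0star. emeasure N {y \<in> space N. g y = mix \<Lambda> f y} = 0)) \<longrightarrow>
         (\<forall>\<Lambda>1\<in>M0star. \<forall>\<Lambda>2\<in>M0star. \<forall>\<phi>1\<in>PhiStar. \<forall>\<phi>2\<in>PhiStar. AE y in N.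
            (if g y > mix \<Lambda>1 f y then 1 else 0) = (if g y > mix \<Lambda>2 f y then (1::real) else 0) \<and>
            (if g y > mix \<Lambda>2 f y then 1 else 0) = \<phi>1 y \<and>
            \<phi>1 y = \<phi>2 y))
     \<and> (\<forall>\<Lambda>\<in>M0star. emeasure \<Lambda> (space \<Lambda>) > 0 \<longrightarrow>
          least_favorable N f Theta0 \<alpha> g (scale_measure (ennreal (1 / measure \<Lambda> (space \<Lambda>))) \<Lambda>))
     \<and> (\<forall>\<Lambda>. least_favorable N f Theta0 \<alpha> g \<Lambda> \<longrightarrow>
          (\<exists>cv \<kappa>. is_level_NP N \<alpha> (mix \<Lambda> f) g cv \<kappa>) \<and>
          (\<forall>cv \<kappa>. is_level_NP N \<alpha> (mix \<Lambda> f) g cv \<kappa> \<longrightarrow> scale_measure (ennreal cv) \<Lambda> \<in> M0star))"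
proof -
  note defs = assms(15-19)
  have "main N f Theta Theta0 Theta1 \<alpha> \<phi>ah \<Omega>"
    by (intro main.intro dens.intro main_axioms.intro) (fact sigma_fin joint_meas dens_nonneg dens_one sub0 sub1 alpha ah Omega)+
  then interpret M: main N f Theta Theta0 Theta1 \<alpha> \<phi>ah \<Omega> .
  have PS: "PhiStar = M.PhiStar" unfolding defs M.PhiStar_def M.J_def ..
  have MS: "M0star = M.M0star" unfolding defs M.M0star_def ..
  have c1: "PhiStar \<noteq> {}" unfolding PS M.PhiStar_def using M.part1 by blast
  have c2: "\<forall>\<Lambda>\<in>M0. PhiStarL \<Lambda> \<noteq> {} \<and>
          (\<forall>\<phi>\<in>PhiStarL \<Lambda>. \<exists>\<kappa>\<in>Phi N. AE y in N.
              (g y > mix \<Lambda> f y \<longrightarrow> \<phi> y = 1) \<and>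
              (g y = mix \<Lambda> f y \<longrightarrow> \<phi> y = \<kappa> y) \<and>
              (g y < mix \<Lambda> f y \<longrightarrow> \<phi> y = 0))"
  proof
    fix L assume "L \<in> M0"
    hence Ladm: "M.admissible L" unfolding defs by (rule M.M0_adm)
    have ne: "PhiStarL L \<noteq> {}" unfolding defs using M.part2(1,2)[OF Ladm] by blast
    have "\<exists>\<kappa>\<in>Phi N. AE y in N.
              (g y > mix L f y \<longrightarrow> \<phi> y = 1) \<and>
              (g y = mix L f y \<longrightarrow> \<phi> y = \<kappa> y) \<and>
              (g y < mix L f y \<longrightarrow> \<phi> y = 0)" if \<phi>: "\<phi> \<in> PhiStarL L" for \<phi>
    proof -
      have P: "\<phi> \<in> Phi N" "\<forall>\<psi>\<in>Phi N. M.lag \<psi> L \<le> M.lag \<phi> L" using \<phi> unfolding defs by auto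
      from M.part2(3)[OF Ladm P] have "AE y in N.
              (g y > mix L f y \<longrightarrow> \<phi> y = 1) \<and>
              (g y = mix L f y \<longrightarrow> \<phi> y = \<phi> y) \<and>
              (g y < mix L f y \<longrightarrow> \<phi> y = 0)" unfolding defs by simp
      thus ?thesis using P(1) by blast
    qed
    thus "PhiStarL L \<noteq> {} \<and>
          (\<forall>\<phi>\<in>PhiStarL L. \<exists>\<kappa>\<in>Phi N. AE y in N.
              (g y > mix L f y \<longrightarrow> \<phi> y = 1) \<and>
              (g y = mix L f y \<longrightarrow> \<phi> y = \<kappa> y) \<and>
              (g y < mix L f y \<longrightarrow> \<phi> y = 0))" using ne by blast
  qed
  have c3: "(SUP \<phi>\<in>Phi_alpha N f Theta0 \<alpha>. objP N \<phi>ah g \<phi>) = (INF \<Lambda>\<in>M0. dualf N f \<alpha> \<phi>ah g \<Lambda>)"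
    using M.duality unfolding defs M.V_def M.J_def .
  have c4: "(M0star \<noteq> {} \<and> (\<forall>\<Lambda>\<in>M0star. emeasure N {y \<in> space N. g y = mix \<Lambda> f y} = 0)) \<longrightarrow>
         (\<forall>\<Lambda>1\<in>M0star. \<forall>\<Lambda>2\<in>M0star. \<forall>\<phi>1\<in>PhiStar. \<forall>\<phi>2\<in>PhiStar. AE y in N.
            (if g y > mix \<Lambda>1 f y then 1 else 0) = (if g y > mix \<Lambda>2 f y then (1::real) else 0) \<and>
            (if g y > mix \<Lambda>2 f y then 1 else 0) = \<phi>1 y \<and>
            \<phi>1 y = \<phi>2 y)"
    unfolding MS PS defs(1) using M.part4 by blast
  have c5: "\<forall>\<Lambda>\<in>M0star. emeasure \<Lambda> (space \<Lambda>) > 0 \<longrightarrow>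
          least_favorable N f Theta0 \<alpha> g (scale_measure (ennreal (1 / measure \<Lambda> (space \<Lambda>))) \<Lambda>)"
    unfolding MS defs(1) using M.part5 by blast
  have c6: "\<forall>\<Lambda>. least_favorable N f Theta0 \<alpha> g \<Lambda> \<longrightarrow>
          (\<exists>cv \<kappa>. is_level_NP N \<alpha> (mix \<Lambda> f) g cv \<kappa>) \<and>
          (\<forall>cv \<kappa>. is_level_NP N \<alpha> (mix \<Lambda> f) g cv \<kappa> \<longrightarrow> scale_measure (ennreal cv) \<Lambda> \<in> M0star)"
    unfolding MS defs(1) using M.part6 by blast
  show ?thesis using c1 c2 c3 c4 c5 c6 by blast
qed

end
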